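(* Let $G$ be a $(2,2)$-tight simple graph. Then there exists a placement $p$ such that the framework $(G,p)$ is well-positioned and minimally rigid in $(\mathbb{R}^2,\|\cdot\|_\infty)$.
   Context: A simple graph $G=(V,E)$ is $(2,2)$-tight if $|E|=2|V|-2$ and $i(X)\le 2|X|-2$ for every nonempty $X\subseteq V$, where $i(X)$ is the number of edges with both endpoints in $X$. A placement is an injective map $p:V\to\mathbb{R}^2$; $\|x\|_\infty=\max(|x_1|,|x_2|)$. $(G,p)$ is well-positioned if for each edge $uv$ there is a unique $k\in\{1,2\}$ with $\|p(u)-p(v)\|_\infty=|(p(u)-p(v))_k|$. The rigidity map is $f_G:(\mathbb{R}^2)^V\to\mathbb{R}^E$, $(x(v))_v\mapsto(\|x(v)-x(w)\|_\infty)_{vw\in E}$; for well-positioned $(G,p)$ it is differentiable at $p$. $(G,p)$ is rigid if every element of the kernel of the differential $df_G(p)$ is of the form $(a,\dots,a)$ with $a\in\mathbb{R}^2$; it is minimally rigid if it is rigid and $(G-e,p)$ is not rigid for every edge $e$. *)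

theory Defs
  imports "HOL-Analysis.Analysis"
begin

text \<open>Placements are points of (R^2)^V, i.e. elements of
  (real^2)^'a, a Euclidean space, so the rigidity map is differentiable in the
  usual Frechet sense.\<close>

definition simple_graph :: "'a::finite set set \<Rightarrow> bool" where
  "simple_graph E \<longleftrightarrow> (\<forall>e\<in>E. card e = 2)"

definition induced_edges :: "'a set set \<Rightarrow> 'a set \<Rightarrow> nat" where
  "induced_edges E X = card {e\<in>E. e \<subseteq> X}"

definition tight22 :: "'a::finite set set \<Rightarrow> bool" where
  "tight22 E \<longleftrightarrow>
     int (card E) = 2 * int (card (UNIV :: 'a set)) - 2 \<and>
     (\<forall>X::'a set. X \<noteq> {} \<longrightarrow> int (induced_edges E X) \<le> 2 * int (card X) - 2)"

definition linf :: "real^2 \<Rightarrow> real" where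
  "linf x = max \<bar>x$1\<bar> \<bar>x$2\<bar>"

definition placement :: "(real^2)^'a::finite \<Rightarrow> bool" where
  "placement p \<longleftrightarrow> inj (\<lambda>v. p$v)"

definition well_positioned :: "'a::finite set set \<Rightarrow> (real^2)^'a \<Rightarrow> bool" where
  "well_positioned E p \<longleftrightarrow>
     (\<forall>u w. {u,w} \<in> E \<longrightarrow>
        card {k::2. linf (p$u - p$w) = \<bar>(p$u - p$w)$k\<bar>} = 1)"

definition edge_len :: "'a::finite \<Rightarrow> 'a \<Rightarrow> (real^2)^'a \<Rightarrow> real" where
  "edge_len u w x = linf (x$u - x$w)"

definition rigid :: "'a::finite set set \<Rightarrow> (real^2)^'a \<Rightarrow> bool" where
  "rigid E p \<longleftrightarrow>
     (\<forall>x::(real^2)^'a.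
        (\<forall>u w. {u,w} \<in> E \<longrightarrow> frechet_derivative (edge_len u w) (at p) x = 0)
        \<longrightarrow> (\<exists>a::real^2. \<forall>v. x$v = a))"

definition minimally_rigid :: "'a::finite set set \<Rightarrow> (real^2)^'a \<Rightarrow> bool" where
  "minimally_rigid E p \<longleftrightarrow> rigid E p \<and> (\<forall>e\<in>E. \<not> rigid (E - {e}) p)"

end

theory Submission
  imports Defs
begin


definition cnt :: "'a set set \<Rightarrow> 'a set \<Rightarrow> nat" where
  "cnt S X = card {e\<in>S. e \<subseteq> X}"

definition sp :: "nat \<Rightarrow> 'a set set \<Rightarrow> bool" where
  "sp k S \<longleftrightarrow> (\<forall>X. finite X \<and> X \<noteq> {} \<longrightarrow> cnt S X + k \<le> k * card X)"

definition gr :: "'a set \<Rightarrow> 'a set set \<Rightarrow> bool" where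
  "gr V E \<longleftrightarrow> finite V \<and> (\<forall>e\<in>E. e \<subseteq> V \<and> card e = 2)"

definition deg :: "'a set set \<Rightarrow> 'a \<Rightarrow> nat" where
  "deg E v = card {e\<in>E. v \<in> e}"

lemma gr_finite: "gr V E \<Longrightarrow> finite E"
  unfolding gr_def by (meson Pow_iff finite_Pow_iff rev_finite_subset subsetI)

lemma cnt_le: "finite S \<Longrightarrow> cnt S X \<le> card S"
  unfolding cnt_def by (simp add: card_mono)

lemma cnt_mono: "S \<subseteq> T \<Longrightarrow> finite T \<Longrightarrow> cnt S X \<le> cnt T X"
  unfolding cnt_def by (rule card_mono) auto

lemma cnt_monoX: "X \<subseteq> Y \<Longrightarrow> finite S \<Longrightarrow> cnt S X \<le> cnt S Y"
  unfolding cnt_def by (rule card_mono) auto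

lemma sp_mono: "sp k T \<Longrightarrow> S \<subseteq> T \<Longrightarrow> finite T \<Longrightarrow> sp k S"
  unfolding sp_def by (meson add_le_mono1 cnt_mono le_trans)

lemma cnt_insert: assumes "e \<notin> S" "finite S" shows " cnt (insert e S) X = cnt S X + (if e \<subseteq> X then 1 else 0)"
proof -
  have "{x\<in>insert e S. x \<subseteq> X} = (if e \<subseteq> X then insert e {x\<in>S. x\<subseteq>X} else {x\<in>S. x \<subseteq> X})"
    by auto
  then show ?thesis unfolding cnt_def using assms by (simp add: card_insert_if)
qed

lemma cnt_remove: "e \<in> S \<Longrightarrow> finite S \<Longrightarrow> cnt S X = cnt (S - {e}) X + (if e \<subseteq> X then 1 else 0)"
  using cnt_insert[of e "S - {e}" X] by (simp add: insert_absorb)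

lemma cnt_avoid: "(\<forall>e\<in>S. v \<notin> e) \<Longrightarrow> cnt S X = cnt S (X - {v})"
  unfolding cnt_def by (rule arg_cong[where f=card]) auto

lemma cnt_empty[simp]: "cnt {} X = 0"
  unfolding cnt_def by simp

lemma sp_empty: "sp 1 {}"
  unfolding sp_def by (auto simp: Suc_le_eq card_gt_0_iff)

lemma sp1_insert:
  assumes "sp 1 S" "finite S" "\<forall>e\<in>S. v \<notin> e" "v \<noteq> a"
  shows "sp 1 (insert {v,a} S)"
  unfolding sp_def
proof (intro allI impI)
  fix X :: "'a set" assume X: "finite X \<and> X \<noteq> {}"
  have ni: "{v,a} \<notin> S" using assms(3) by auto
  have c: "cnt (insert {v,a} S) X = cnt S X + (if {v,a} \<subseteq> X then 1 else 0)"
    using cnt_insert[OF ni assms(2)] .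
  show "cnt (insert {v, a} S) X + 1 \<le> 1 * card X"
  proof (cases "{v,a} \<subseteq> X")
    case False then show ?thesis using c assms(1) X unfolding sp_def by auto
  next
    case True
    have e: "cnt S X = cnt S (X - {v})" by (rule cnt_avoid[OF assms(3)])
    have ne: "X - {v} \<noteq> {}" using True assms(4) by auto
    have cX: "card (X - {v}) = card X - 1" "card X \<ge> 1" using True X by (simp, meson card_0_eq leI less_one)
    have h: "cnt S (X - {v}) + 1 \<le> card (X - {v})" using assms(1) X ne unfolding sp_def by auto
    have "cnt (insert {v, a} S) X = cnt S X + 1" using c True by simp
    then show ?thesis using e h cX by linarith
  qed
qed

lemma sp1_split:
  assumes "sp 1 S" "finite S" "{a,b} \<in> S" "\<forall>e\<in>S. v \<notin> e" "v \<noteq> a" "v \<noteq> b" "a \<noteq> b"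
  shows "sp 1 (insert {v,a} (insert {v,b} (S - {{a,b}})))"
  unfolding sp_def
proof (intro allI impI)
  fix X :: "'a set" assume X: "finite X \<and> X \<noteq> {}"
  define S0 where "S0 = S - {{a,b}}"
  have fS0: "finite S0" using assms(2) S0_def by simp
  have n1: "{v,b} \<notin> S0" using assms(4) S0_def by auto
  have n2: "{v,a} \<notin> insert {v,b} S0" using assms(4,7) S0_def by (auto simp: doubleton_eq_iff)
  have c1: "cnt (insert {v,a} (insert {v,b} S0)) X = cnt S0 X + (if {v,a} \<subseteq> X then 1 else 0) + (if {v,b} \<subseteq> X then 1 else 0)"
    using cnt_insert[OF n2] cnt_insert[OF n1 fS0] fS0 by simp
  have c2: "\<And>Y. cnt S Y = cnt S0 Y + (if {a,b} \<subseteq> Y then 1 else 0)"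
    using cnt_remove[OF assms(3,2)] S0_def by simp
  have av: "\<forall>e\<in>S0. v \<notin> e" using assms(4) S0_def by auto
  have "cnt (insert {v, a} (insert {v, b} S0)) X + 1 \<le> card X"
  proof (cases "v \<in> X")
    case False
    then have "cnt (insert {v,a} (insert {v,b} S0)) X = cnt S0 X" using c1 by simp
    moreover have "cnt S0 X \<le> cnt S X" using c2[of X] by simp
    moreover have "cnt S X + 1 \<le> card X" using assms(1) X unfolding sp_def by auto
    ultimately show ?thesis by linarith
  next
    case True
    have e: "cnt S0 X = cnt S0 (X - {v})" by (rule cnt_avoid[OF av])
    have cX: "card (X - {v}) = card X - 1" "card X \<ge> 1" using True X by (simp, meson card_0_eq leI less_one)
    show ?thesis
    proof (cases "X - {v} = {}")
      case True
      then have Xv: "X = {v}" using \<open>v \<in> X\<close> by auto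
      have "cnt S X + 1 \<le> card X" using assms(1) X unfolding sp_def by auto
      then have "cnt S0 X = 0" using c2[of X] Xv by simp
      moreover have "\<not> {v,a} \<subseteq> X" "\<not> {v,b} \<subseteq> X" using Xv assms(5,6) by auto
      ultimately show ?thesis using c1 Xv by simp
    next
      case False
      have h: "cnt S (X - {v}) + 1 \<le> card (X - {v})" using assms(1) X False unfolding sp_def by auto
      have h2: "cnt S (X - {v}) = cnt S0 (X - {v}) + (if {a,b} \<subseteq> X - {v} then 1 else 0)" using c2 .
      have h3: "(if {v,a} \<subseteq> X then 1 else 0) + (if {v,b} \<subseteq> X then 1 else (0::nat)) \<le> (if {a,b} \<subseteq> X - {v} then 1 else 0) + 1"
        using True assms(5,6) by auto
      have "cnt (insert {v,a} (insert {v,b} S0)) X + 1 \<le> cnt S (X - {v}) + 1 + 1"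
        using c1 e h2 h3 by linarith
      then show ?thesis using h cX by linarith
    qed
  qed
  then show "cnt (insert {v, a} (insert {v, b} (S - {{a, b}}))) X + 1 \<le> 1 * card X"
    unfolding S0_def by (simp only: mult_1)
qed

lemma card_filter_sum: "finite E \<Longrightarrow> card {e\<in>E. P e} = (\<Sum>e\<in>E. of_bool (P e))"
  by (simp add: Collect_conj_eq Int_commute)

lemma handshake:
  assumes "gr V E"
  shows "(\<Sum>v\<in>V. deg E v) = 2 * card E"
proof -
  have fE: "finite E" using gr_finite assms .
  have fV: "finite V" using assms gr_def by auto
  have "(\<Sum>v\<in>V. deg E v) = (\<Sum>v\<in>V. \<Sum>e\<in>E. of_bool (v \<in> e))"
    unfolding deg_def using card_filter_sum[OF fE] by simp
  also have "\<dots> = (\<Sum>e\<in>E. \<Sum>v\<in>V. of_bool (v \<in> e))" by (rule sum.swap)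
  also have "\<dots> = (\<Sum>e\<in>E. (2::nat))"
  proof (rule sum.cong)
    fix e assume "e \<in> E"
    then have "e \<subseteq> V" "card e = 2" using assms unfolding gr_def by auto
    then show "(\<Sum>v\<in>V. of_bool (v \<in> e)) = (2::nat)" using fV
      by (simp add: Int_absorb1 Int_commute Collect_mem_eq)
  qed simp
  finally show ?thesis by simp
qed

lemma lowdeg:
  assumes "gr V E" "V \<noteq> {}" "sp 2 E"
  shows "\<exists>v\<in>V. deg E v \<le> 3"
proof (rule ccontr)
  assume "\<not> ?thesis"
  then have "\<forall>v\<in>V. 4 \<le> deg E v" by auto
  then have "(\<Sum>v\<in>V. (4::nat)) \<le> (\<Sum>v\<in>V. deg E v)" by (intro sum_mono) auto
  then have a: "4 * card V \<le> 2 * card E" using handshake[OF assms(1)] by simp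
  have fV: "finite V" using assms gr_def by auto
  have "cnt E V = card E" unfolding cnt_def using assms(1) gr_def
    by (metis (no_types, lifting) Collect_cong Collect_mem_eq)
  then have "card E + 2 \<le> 2 * card V" using assms(3) fV assms(2) unfolding sp_def by metis
  then show False using a by linarith
qed



lemma small_delta:
  fixes d :: real
  assumes "finite B" "0 < d"
  shows "\<exists>\<delta>. 0 < \<delta> \<and> \<delta> < d \<and> \<delta> \<notin> B"
proof -
  have "infinite ({0<..<d} - B)" using assms by (simp add: Diff_infinite_finite)
  then obtain t where "t \<in> {0<..<d} - B" by (metis ex_in_conv finite.emptyI)
  then show ?thesis by auto
qed

lemma sign_pert:
  fixes a t :: real
  assumes "\<bar>t\<bar> < \<bar>a\<bar>"
  shows "(a + t > 0 \<longleftrightarrow> a > 0) \<and> a + t \<noteq> 0"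
  using assms by (auto simp: abs_if split: if_splits)

lemma prod_sign:
  fixes a b a' b' :: real
  assumes "(a' > 0 \<longleftrightarrow> a > 0)" "a' \<noteq> 0" "a \<noteq> 0" "(b' > 0 \<longleftrightarrow> b > 0)" "b' \<noteq> 0" "b \<noteq> 0"
  shows "(a' * b' > 0 \<longleftrightarrow> a * b > 0) \<and> a' * b' \<noteq> 0"
  using assms by (auto simp: zero_less_mult_iff)

lemma near:
  fixes f g :: "'a \<Rightarrow> real" and p q s :: real
  assumes "finite F" "finite G" "finite W" "\<forall>u\<in>W. f u \<noteq> p \<and> g u \<noteq> q" "s = 1 \<or> s = -1"
  shows "\<exists>x y. x \<notin> F \<and> y \<notin> G \<and> s * ((x - p) * (y - q)) > 0 \<and>
     (\<forall>u\<in>W. ((x - f u) * (y - g u) > 0 \<longleftrightarrow> (p - f u) * (q - g u) > 0) \<and> (x - f u) * (y - g u) \<noteq> 0)"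
proof -
  define D where "D = (\<lambda>u. \<bar>p - f u\<bar>) ` W \<union> (\<lambda>u. \<bar>q - g u\<bar>) ` W \<union> {1}"
  have fD: "finite D" "D \<noteq> {}" using assms(3) D_def by auto
  have Dpos: "\<forall>t\<in>D. t > 0" using assms(4) D_def by auto
  define d where "d = Min D"
  have d0: "d > 0" using fD Dpos d_def by auto
  have dle: "\<And>u. u \<in> W \<Longrightarrow> d \<le> \<bar>p - f u\<bar> \<and> d \<le> \<bar>q - g u\<bar>"
    using fD d_def D_def by auto
  define B where "B = (\<lambda>t. t - p) ` F \<union> (\<lambda>t. s * (t - q)) ` G"
  have fB: "finite B" using assms(1,2) B_def by auto
  obtain \<delta> where del: "0 < \<delta>" "\<delta> < d" "\<delta> \<notin> B" using small_delta[OF fB d0] by blast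
  have ss: "s * s = 1" using assms(5) by auto
  define x where "x = p + \<delta>"
  define y where "y = q + s * \<delta>"
  have "x \<notin> F"
  proof
    assume "x \<in> F" then have "x - p \<in> B" unfolding B_def by auto
    then show False using del x_def by simp
  qed
  moreover have "y \<notin> G"
  proof
    assume "y \<in> G" then have "s * (y - q) \<in> B" unfolding B_def by auto
    moreover have "s * (y - q) = \<delta>" using ss y_def by (simp add: algebra_simps)
    ultimately show False using del by simp
  qed
  moreover have "s * ((x - p) * (y - q)) > 0"
  proof -
    have "s * ((x - p) * (y - q)) = (s * s) * (\<delta> * \<delta>)" using x_def y_def by (simp add: algebra_simps)
    then show ?thesis using ss del by simp
  qed
  moreover have "\<forall>u\<in>W. ((x - f u) * (y - g u) > 0 \<longleftrightarrow> (p - f u) * (q - g u) > 0) \<and> (x - f u) * (y - g u) \<noteq> 0"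
  proof
    fix u assume u: "u \<in> W"
    have h1: "\<bar>\<delta>\<bar> < \<bar>p - f u\<bar>" using dle[OF u] del by simp
    have h2: "\<bar>s * \<delta>\<bar> < \<bar>q - g u\<bar>" using dle[OF u] del assms(5) by auto
    have e1: "x - f u = (p - f u) + \<delta>" using x_def by simp
    have e2: "y - g u = (q - g u) + s * \<delta>" using y_def by simp
    have n1: "p - f u \<noteq> 0" "q - g u \<noteq> 0" using assms(4) u by auto
    show "((x - f u) * (y - g u) > 0 \<longleftrightarrow> (p - f u) * (q - g u) > 0) \<and> (x - f u) * (y - g u) \<noteq> 0"
      unfolding e1 e2 by (rule prod_sign) (use sign_pert[OF h1] sign_pert[OF h2] n1 in auto)
  qed
  ultimately show ?thesis by blast
qed

lemma G2:
  fixes f g :: "'a \<Rightarrow> real"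
  assumes "finite F" "finite G" "f a \<noteq> f b" "g a \<noteq> g b"
  shows "\<exists>x y. x \<notin> F \<and> y \<notin> G \<and> (x - f a) * (y - g a) > 0 \<and> (x - f b) * (y - g b) < 0"
proof (cases "(f a - f b) * (g a - g b) < 0")
  case True
  obtain x y where xy: "x \<notin> F" "y \<notin> G" "1 * ((x - f a) * (y - g a)) > 0"
    "\<forall>u\<in>{b}. ((x - f u) * (y - g u) > 0 \<longleftrightarrow> (f a - f u) * (g a - g u) > 0) \<and> (x - f u) * (y - g u) \<noteq> 0"
    using near[of F G "{b}" f "f a" g "g a" 1] assms by auto
  have "(x - f b) * (y - g b) < 0" using xy True by (auto simp: not_less order_le_less)
  then show ?thesis using xy by auto
next
  case False
  then have p: "(f a - f b) * (g a - g b) > 0" using assms(3,4) by (simp add: not_less order_le_less)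
  obtain x y where xy: "x \<notin> F" "y \<notin> G" "(-1) * ((x - f b) * (y - g b)) > 0"
    "\<forall>u\<in>{a}. ((x - f u) * (y - g u) > 0 \<longleftrightarrow> (f b - f u) * (g b - g u) > 0) \<and> (x - f u) * (y - g u) \<noteq> 0"
    using near[of F G "{a}" f "f b" g "g b" "-1"] assms by auto
  have "(f b - f a) * (g b - g a) > 0" using p by (simp add: algebra_simps)
  then have "(x - f a) * (y - g a) > 0" using xy by auto
  moreover have "(x - f b) * (y - g b) < 0" using xy by (simp add: mult_less_0_iff zero_less_mult_iff)
  ultimately show ?thesis using xy by auto
qed

lemma G3:
  fixes f g :: "'a \<Rightarrow> real"
  assumes "finite F" "finite G" "f a \<noteq> f b" "f a \<noteq> f c" "f b \<noteq> f c"
    "g a \<noteq> g b" "g a \<noteq> g c" "g b \<noteq> g c" "(f a - f b) * (g a - g b) > 0"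
  shows "\<exists>x y. x \<notin> F \<and> y \<notin> G \<and> (x - f a) * (y - g a) > 0 \<and> (x - f b) * (y - g b) > 0
     \<and> (x - f c) * (y - g c) < 0"
proof -
  have sym: "\<And>u w. (f u - f w) * (g u - g w) = (f w - f u) * (g w - g u)" by (simp add: algebra_simps)
  have nz: "\<And>u w. f u \<noteq> f w \<Longrightarrow> g u \<noteq> g w \<Longrightarrow> (f u - f w) * (g u - g w) \<noteq> 0" by simp
  show ?thesis
  proof (cases "(f a - f c) * (g a - g c) < 0")
    case True
    obtain x y where xy: "x \<notin> F" "y \<notin> G" "1 * ((x - f a) * (y - g a)) > 0"
      "\<forall>u\<in>{b,c}. ((x - f u) * (y - g u) > 0 \<longleftrightarrow> (f a - f u) * (g a - g u) > 0) \<and> (x - f u) * (y - g u) \<noteq> 0"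
      using near[of F G "{b,c}" f "f a" g "g a" 1] assms by auto
    have "(x - f b) * (y - g b) > 0" "(x - f c) * (y - g c) < 0"
      using xy True assms(9) by (auto simp: not_less order_le_less)
    then show ?thesis using xy by auto
  next
    case F1: False
    then have ac: "(f a - f c) * (g a - g c) > 0" using nz[of a c] assms by (simp add: not_less order_le_less)
    show ?thesis
    proof (cases "(f b - f c) * (g b - g c) < 0")
      case True
      have ba: "(f b - f a) * (g b - g a) > 0" using assms(9) sym by simp
      obtain x y where xy: "x \<notin> F" "y \<notin> G" "1 * ((x - f b) * (y - g b)) > 0"
        "\<forall>u\<in>{a,c}. ((x - f u) * (y - g u) > 0 \<longleftrightarrow> (f b - f u) * (g b - g u) > 0) \<and> (x - f u) * (y - g u) \<noteq> 0"
        using near[of F G "{a,c}" f "f b" g "g b" 1] assms by auto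
      have "(x - f a) * (y - g a) > 0" "(x - f c) * (y - g c) < 0"
        using xy True ba by (auto simp: not_less order_le_less)
      then show ?thesis using xy by auto
    next
      case False
      then have bc: "(f b - f c) * (g b - g c) > 0" using nz[of b c] assms by (simp add: not_less order_le_less)
      have ca: "(f c - f a) * (g c - g a) > 0" "(f c - f b) * (g c - g b) > 0" using ac bc sym by auto
      obtain x y where xy: "x \<notin> F" "y \<notin> G" "(-1) * ((x - f c) * (y - g c)) > 0"
        "\<forall>u\<in>{a,b}. ((x - f u) * (y - g u) > 0 \<longleftrightarrow> (f c - f u) * (g c - g u) > 0) \<and> (x - f u) * (y - g u) \<noteq> 0"
        using near[of F G "{a,b}" f "f c" g "g c" "-1"] assms by auto
      have "(x - f a) * (y - g a) > 0" "(x - f b) * (y - g b) > 0" using xy ca by auto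
      moreover have "(x - f c) * (y - g c) < 0" using xy by (simp add: mult_less_0_iff zero_less_mult_iff)
      ultimately show ?thesis using xy by auto
    qed
  qed
qed


definition pos :: "('a \<Rightarrow> real) \<Rightarrow> ('a \<Rightarrow> real) \<Rightarrow> 'a set \<Rightarrow> bool" where
  "pos f g e \<longleftrightarrow> (\<forall>u\<in>e. \<forall>w\<in>e. u \<noteq> w \<longrightarrow> (f u - f w) * (g u - g w) > 0)"

definition realiz :: "'a set \<Rightarrow> 'a set set \<Rightarrow> ('a \<Rightarrow> real) \<Rightarrow> ('a \<Rightarrow> real) \<Rightarrow> bool" where
  "realiz V E f g \<longleftrightarrow> inj_on f V \<and> inj_on g V \<and> sp 1 {e\<in>E. pos f g e} \<and> sp 1 {e\<in>E. \<not> pos f g e}"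

lemma pos_pair: "u \<noteq> w \<Longrightarrow> pos f g {u,w} \<longleftrightarrow> (f u - f w) * (g u - g w) > 0"
  unfolding pos_def by (auto simp: algebra_simps)

lemma pos_cong: "(\<forall>u\<in>e. f u = f' u \<and> g u = g' u) \<Longrightarrow> pos f g e = pos f' g' e"
  unfolding pos_def by auto

lemma edge_at: "card e = 2 \<Longrightarrow> v \<in> e \<Longrightarrow> \<exists>u. u \<noteq> v \<and> e = {v,u}"
  by (metis card_2_iff insert_commute insertE singletonD)

lemma sp1_add_opt:
  assumes "sp 1 S" "finite S" "\<forall>e\<in>S. v \<notin> e" "\<forall>e\<in>T. v \<in> e \<and> card e = 2" "finite T" "card T \<le> 1"
  shows "sp 1 (S \<union> T)"
proof (cases "T = {}")
  case True then show ?thesis using assms by simp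
next
  case False
  then have "card T \<noteq> 0" using assms(5) by simp
  then have "card T = 1" using assms(6) by linarith
  then obtain e where T: "T = {e}" by (rule card_1_singletonE)
  then have "v \<in> e" "card e = 2" using assms(4) by auto
  then obtain a where "a \<noteq> v" "e = {v,a}" using edge_at[of e v] by blast
  then show ?thesis using sp1_insert[OF assms(1,2,3), of a] T by simp
qed

lemma inj_upd:
  assumes "inj_on f (V - {v})" "x \<notin> f ` (V - {v})" "v \<in> V"
  shows "inj_on (f(v:=x)) V"
proof -
  have a: "inj_on (f(v:=x)) (V - {v})" using assms(1) by (simp add: inj_on_def)
  have b: "(f(v:=x)) ` (V - {v}) = f ` (V - {v})" by auto
  have c: "inj_on (f(v:=x)) (insert v (V - {v}))"
    by (rule iffD2[OF inj_on_insert]) (use a b assms(2) in simp)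
  have d: "insert v (V - {v}) = V" using assms(3) by auto
  show ?thesis using c unfolding d .
qed

lemma ins:
  assumes gr: "gr V E" and v: "v \<in> V" and r: "realiz (V - {v}) {e\<in>E. v \<notin> e} f' g'"
    and x: "x \<notin> f' ` (V - {v})" and y: "y \<notin> g' ` (V - {v})"
    and P1: "sp 1 ({e\<in>E. v \<notin> e \<and> pos f' g' e} \<union> {e\<in>E. v \<in> e \<and> pos (f'(v:=x)) (g'(v:=y)) e})"
    and P2: "sp 1 ({e\<in>E. v \<notin> e \<and> \<not> pos f' g' e} \<union> {e\<in>E. v \<in> e \<and> \<not> pos (f'(v:=x)) (g'(v:=y)) e})"
  shows "realiz V E (f'(v:=x)) (g'(v:=y))"
proof -
  have i1: "inj_on (f'(v:=x)) V"
    using r x v unfolding realiz_def by (intro inj_upd) auto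
  have i2: "inj_on (g'(v:=y)) V"
    using r y v unfolding realiz_def by (intro inj_upd) auto
  have pc: "\<And>e. v \<notin> e \<Longrightarrow> pos (f'(v:=x)) (g'(v:=y)) e = pos f' g' e"
    by (rule pos_cong) auto
  have s1: "{e\<in>E. pos (f'(v:=x)) (g'(v:=y)) e} = {e\<in>E. v \<notin> e \<and> pos f' g' e} \<union> {e\<in>E. v \<in> e \<and> pos (f'(v:=x)) (g'(v:=y)) e}"
    using pc by blast
  have s2: "{e\<in>E. \<not> pos (f'(v:=x)) (g'(v:=y)) e} = {e\<in>E. v \<notin> e \<and> \<not> pos f' g' e} \<union> {e\<in>E. v \<in> e \<and> \<not> pos (f'(v:=x)) (g'(v:=y)) e}"
    using pc by blast
  show ?thesis unfolding realiz_def using i1 i2 P1 P2 s1 s2 by simp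
qed

lemma gr_del: "gr V E \<Longrightarrow> gr (V - {v}) {e\<in>E. v \<notin> e}"
  unfolding gr_def by auto

lemma fresh_real: "finite (A::real set) \<Longrightarrow> \<exists>x. x \<notin> A"
  using ex_new_if_finite infinite_UNIV_char_0 by blast

lemma case_low:
  assumes gr: "gr V E" and sp: "sp 2 E" and v: "v \<in> V" and d: "deg E v \<le> 2"
    and IH: "\<exists>f g. realiz (V - {v}) {e\<in>E. v \<notin> e} f g"
  shows "\<exists>f g. realiz V E f g"
proof -
  obtain f' g' where r: "realiz (V - {v}) {e\<in>E. v \<notin> e} f' g'" using IH by blast
  define V' where "V' = V - {v}"
  define E' where "E' = {e\<in>E. v \<notin> e}"
  have fE: "finite E" using gr gr_finite by blast
  have fV: "finite V" using gr gr_def by auto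
  have fEn: "finite {e\<in>E. v \<in> e}" using fE by simp
  have E2: "\<forall>e\<in>E. card e = 2 \<and> e \<subseteq> V" using gr gr_def by auto
  have Enc: "\<forall>e\<in>{e\<in>E. v \<in> e}. v \<in> e \<and> card e = 2" using E2 by auto
  obtain x y where xy: "x \<notin> f' ` V'" "y \<notin> g' ` V'"
    and c1: "card {e\<in>E. v \<in> e \<and> pos (f'(v:=x)) (g'(v:=y)) e} \<le> 1"
    and c2: "card {e\<in>E. v \<in> e \<and> \<not> pos (f'(v:=x)) (g'(v:=y)) e} \<le> 1"
  proof (cases "deg E v \<le> 1")
    case True
    obtain x where x: "x \<notin> f' ` V'" using fresh_real fV V'_def by blast
    obtain y where y: "y \<notin> g' ` V'" using fresh_real fV V'_def by blast
    have "card {e\<in>E. v \<in> e \<and> pos (f'(v:=x)) (g'(v:=y)) e} \<le> deg E v"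
      unfolding deg_def by (rule card_mono) (use fE in auto)
    moreover have "card {e\<in>E. v \<in> e \<and> \<not> pos (f'(v:=x)) (g'(v:=y)) e} \<le> deg E v"
      unfolding deg_def by (rule card_mono) (use fE in auto)
    ultimately show ?thesis using that x y True by force
  next
    case False
    then have "card {e\<in>E. v \<in> e} = 2" using d unfolding deg_def by simp
    then obtain e1 e2 where ee: "e1 \<noteq> e2" "{e\<in>E. v \<in> e} = {e1,e2}" by (meson card_2_iff)
    have "e1 \<in> E" "v \<in> e1" "e2 \<in> E" "v \<in> e2" using ee by auto
    then obtain a b where ab: "a \<noteq> v" "e1 = {v,a}" "b \<noteq> v" "e2 = {v,b}" using E2 edge_at by metis
    have "a \<noteq> b" using ab ee by auto
    have abV: "a \<in> V'" "b \<in> V'" using ab \<open>e1 \<in> E\<close> \<open>e2 \<in> E\<close> E2 V'_def by auto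
    have ij: "inj_on f' V'" "inj_on g' V'" using r unfolding realiz_def V'_def by auto
    have "f' a \<noteq> f' b" "g' a \<noteq> g' b" using inj_on_eq_iff[OF ij(1) abV] inj_on_eq_iff[OF ij(2) abV] \<open>a \<noteq> b\<close> by auto
    then obtain x y where xy: "x \<notin> f' ` V'" "y \<notin> g' ` V'" "(x - f' a) * (y - g' a) > 0" "(x - f' b) * (y - g' b) < 0"
      using G2[of "f' ` V'" "g' ` V'" f' a b g'] fV unfolding V'_def by blast
    have p1: "pos (f'(v:=x)) (g'(v:=y)) e1" using ab xy by (simp add: pos_pair)
    have p2: "\<not> pos (f'(v:=x)) (g'(v:=y)) e2" using ab xy by (simp add: pos_pair)
    have "{e\<in>E. v \<in> e \<and> pos (f'(v:=x)) (g'(v:=y)) e} \<subseteq> {e1}"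
    proof
      fix e assume "e \<in> {e\<in>E. v \<in> e \<and> pos (f'(v:=x)) (g'(v:=y)) e}"
      then have "e \<in> {e1,e2}" "pos (f'(v:=x)) (g'(v:=y)) e" using ee by auto
      then show "e \<in> {e1}" using p2 by (cases "e = e2") auto
    qed
    then have "card {e\<in>E. v \<in> e \<and> pos (f'(v:=x)) (g'(v:=y)) e} \<le> card {e1}"
      by (intro card_mono) auto
    moreover have "card {e1} = 1" by simp
    ultimately have k1: "card {e\<in>E. v \<in> e \<and> pos (f'(v:=x)) (g'(v:=y)) e} \<le> 1" by linarith
    have "{e\<in>E. v \<in> e \<and> \<not> pos (f'(v:=x)) (g'(v:=y)) e} \<subseteq> {e2}"
    proof
      fix e assume "e \<in> {e\<in>E. v \<in> e \<and> \<not> pos (f'(v:=x)) (g'(v:=y)) e}"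
      then have "e \<in> {e1,e2}" "\<not> pos (f'(v:=x)) (g'(v:=y)) e" using ee by auto
      then show "e \<in> {e2}" using p1 by (cases "e = e1") auto
    qed
    then have "card {e\<in>E. v \<in> e \<and> \<not> pos (f'(v:=x)) (g'(v:=y)) e} \<le> card {e2}"
      by (intro card_mono) auto
    moreover have "card {e2} = 1" by simp
    ultimately have k2: "card {e\<in>E. v \<in> e \<and> \<not> pos (f'(v:=x)) (g'(v:=y)) e} \<le> 1" by linarith
    show ?thesis using that[OF xy(1,2) k1 k2] .
  qed
  have rr: "sp 1 {e\<in>E'. pos f' g' e}" "sp 1 {e\<in>E'. \<not> pos f' g' e}" using r unfolding realiz_def E'_def by auto
  have eq1: "{e\<in>E. v \<notin> e \<and> pos f' g' e} = {e\<in>E'. pos f' g' e}" unfolding E'_def by auto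
  have eq2: "{e\<in>E. v \<notin> e \<and> \<not> pos f' g' e} = {e\<in>E'. \<not> pos f' g' e}" unfolding E'_def by auto
  have fE1: "finite {e\<in>E'. pos f' g' e}" "finite {e\<in>E'. \<not> pos f' g' e}" using fE E'_def by simp_all
  have av1: "\<forall>e\<in>{e\<in>E'. pos f' g' e}. v \<notin> e" "\<forall>e\<in>{e\<in>E'. \<not> pos f' g' e}. v \<notin> e" unfolding E'_def by blast+
  have T1: "\<forall>e\<in>{e\<in>E. v \<in> e \<and> pos (f'(v:=x)) (g'(v:=y)) e}. v \<in> e \<and> card e = 2" using E2 by blast
  have T2: "\<forall>e\<in>{e\<in>E. v \<in> e \<and> \<not> pos (f'(v:=x)) (g'(v:=y)) e}. v \<in> e \<and> card e = 2" using E2 by blast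
  have fT: "finite {e\<in>E. v \<in> e \<and> pos (f'(v:=x)) (g'(v:=y)) e}" "finite {e\<in>E. v \<in> e \<and> \<not> pos (f'(v:=x)) (g'(v:=y)) e}"
    using fE by simp_all
  have P1: "sp 1 ({e\<in>E. v \<notin> e \<and> pos f' g' e} \<union> {e\<in>E. v \<in> e \<and> pos (f'(v:=x)) (g'(v:=y)) e})"
    unfolding eq1 by (rule sp1_add_opt[OF rr(1) fE1(1) av1(1) T1 fT(1) c1])
  have P2: "sp 1 ({e\<in>E. v \<notin> e \<and> \<not> pos f' g' e} \<union> {e\<in>E. v \<in> e \<and> \<not> pos (f'(v:=x)) (g'(v:=y)) e})"
    unfolding eq2 by (rule sp1_add_opt[OF rr(2) fE1(2) av1(2) T2 fT(2) c2])
  have xy': "x \<notin> f' ` (V - {v})" "y \<notin> g' ` (V - {v})" using xy unfolding V'_def by simp_all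
  show ?thesis using ins[where f'=f' and g'=g' and x=x and y=y, OF gr v r xy' P1 P2] by blast
qed

lemma pos_v: "u \<noteq> v \<Longrightarrow> pos (f'(v:=x)) (g'(v:=y)) {v,u} \<longleftrightarrow> (x - f' u) * (y - g' u) > 0"
  by (simp add: pos_pair)

lemma cnt_restrict: "(\<forall>e\<in>S. e \<subseteq> W) \<Longrightarrow> cnt S Y = cnt S (Y \<inter> W)"
  unfolding cnt_def by (rule arg_cong[where f=card]) auto

lemma split_sp2:
  assumes gr: "gr V E" and sp: "sp 2 E" and v: "v \<in> V" and ab: "a \<in> V - {v}" "b \<in> V - {v}" "a \<noteq> b"
    and nab: "{a,b} \<notin> E"
    and nt: "\<forall>Y. Y \<subseteq> V \<longrightarrow> 2 \<le> card Y \<longrightarrow> Y \<noteq> V \<longrightarrow> cnt E Y + 2 \<noteq> 2 * card Y"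
  shows "sp 2 (insert {a,b} {e\<in>E. v \<notin> e})"
  unfolding sp_def
proof (intro allI impI)
  fix Y :: "'a set" assume Y: "finite Y \<and> Y \<noteq> {}"
  define E' where "E' = {e\<in>E. v \<notin> e}"
  have fE: "finite E" using gr gr_finite by blast
  have fE': "finite E'" using fE E'_def by simp
  have ni: "{a,b} \<notin> E'" using nab E'_def by simp
  have c: "cnt (insert {a,b} E') Y = cnt E' Y + (if {a,b} \<subseteq> Y then 1 else 0)"
    using cnt_insert[OF ni fE'] .
  have E'E: "E' \<subseteq> E" using E'_def by auto
  show "cnt (insert {a, b} {e \<in> E. v \<notin> e}) Y + 2 \<le> 2 * card Y"
  proof (cases "{a,b} \<subseteq> Y")
    case False
    then have "cnt (insert {a,b} E') Y = cnt E' Y" using c by simp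
    moreover have "cnt E' Y \<le> cnt E Y" using cnt_mono[OF E'E fE] .
    moreover have "cnt E Y + 2 \<le> 2 * card Y" using sp Y unfolding sp_def by blast
    ultimately show ?thesis unfolding E'_def by linarith
  next
    case True
    define Z where "Z = Y \<inter> (V - {v})"
    have inV: "\<forall>e\<in>E'. e \<subseteq> V - {v}" using gr E'_def unfolding gr_def by auto
    have z1: "cnt E' Y = cnt E' Z" unfolding Z_def by (rule cnt_restrict[OF inV])
    have z2: "cnt E' Z = cnt E Z" unfolding cnt_def E'_def Z_def by (rule arg_cong[where f=card]) auto
    have abZ: "a \<in> Z" "b \<in> Z" using True ab Z_def by auto
    have fZ: "finite Z" using Y Z_def by simp
    have cZ: "2 \<le> card Z"
    proof -
      have "{a,b} \<subseteq> Z" using abZ by auto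
      then have "card {a,b} \<le> card Z" using fZ by (rule card_mono[rotated])
      then show ?thesis using ab(3) by simp
    qed
    have ZV: "Z \<subseteq> V" "Z \<noteq> V" using Z_def v by auto
    have "cnt E Z + 2 \<noteq> 2 * card Z" using nt ZV cZ by blast
    moreover have "cnt E Z + 2 \<le> 2 * card Z" using sp fZ abZ unfolding sp_def by blast
    moreover have "card Z \<le> card Y" using Y Z_def by (simp add: card_mono)
    ultimately show ?thesis using c True z1 z2 unfolding E'_def by simp
  qed
qed

lemma case_split:
  assumes gr: "gr V E" and sp: "sp 2 E" and v: "v \<in> V"
    and En: "{e\<in>E. v \<in> e} = {{v,a},{v,b},{v,c}}"
    and dist: "a \<noteq> v" "b \<noteq> v" "c \<noteq> v" "a \<noteq> b" "a \<noteq> c" "b \<noteq> c"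
    and nab: "{a,b} \<notin> E"
    and nt: "\<forall>Y. Y \<subseteq> V \<longrightarrow> 2 \<le> card Y \<longrightarrow> Y \<noteq> V \<longrightarrow> cnt E Y + 2 \<noteq> 2 * card Y"
    and IH: "\<And>E'. gr (V - {v}) E' \<Longrightarrow> sp 2 E' \<Longrightarrow> \<exists>f g. realiz (V - {v}) E' f g"
  shows "\<exists>f g. realiz V E f g"
proof -
  define V' where "V' = V - {v}"
  define E' where "E' = {e\<in>E. v \<notin> e}"
  define H where "H = insert {a,b} E'"
  have fE: "finite E" using gr gr_finite by blast
  have fV: "finite V" using gr gr_def by auto
  have E2: "\<forall>e\<in>E. e \<subseteq> V \<and> card e = 2" using gr gr_def by auto
  have vE: "{v,a} \<in> E" "{v,b} \<in> E" "{v,c} \<in> E" using En by auto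
  have abc: "a \<in> V'" "b \<in> V'" "c \<in> V'" using vE E2 dist V'_def by auto
  have grH: "gr V' H" using gr_del[OF gr, of v] abc dist unfolding gr_def H_def E'_def V'_def by auto
  have spH: "sp 2 H" unfolding H_def E'_def
    by (rule split_sp2[OF gr sp v _ _ dist(4) nab nt]) (use abc V'_def in auto)
  obtain f' g' where r: "realiz V' H f' g'" using IH grH spH unfolding V'_def by blast
  have ij: "inj_on f' V'" "inj_on g' V'" using r realiz_def by auto
  have df: "f' a \<noteq> f' b" "f' a \<noteq> f' c" "f' b \<noteq> f' c"
    using inj_on_eq_iff[OF ij(1)] abc dist by auto
  have dg: "g' a \<noteq> g' b" "g' a \<noteq> g' c" "g' b \<noteq> g' c"
    using inj_on_eq_iff[OF ij(2)] abc dist by auto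
  have fF: "finite (f' ` V')" "finite (g' ` V')" using fV V'_def by auto
  have fH: "finite H" using gr_finite[OF grH] .
  have PHf: "finite {e\<in>H. pos f' g' e}" "finite {e\<in>H. \<not> pos f' g' e}"
    using fH by simp_all
  have spP: "sp 1 {e\<in>H. pos f' g' e}" "sp 1 {e\<in>H. \<not> pos f' g' e}" using r realiz_def by auto
  have rE': "realiz (V - {v}) {e\<in>E. v \<notin> e} f' g'"
  proof -
    have s1: "{e\<in>E'. pos f' g' e} \<subseteq> {e\<in>H. pos f' g' e}" "{e\<in>E'. \<not> pos f' g' e} \<subseteq> {e\<in>H. \<not> pos f' g' e}"
      unfolding H_def by auto
    have "sp 1 {e\<in>E'. pos f' g' e}" by (rule sp_mono[OF spP(1) s1(1) PHf(1)])
    moreover have "sp 1 {e\<in>E'. \<not> pos f' g' e}" by (rule sp_mono[OF spP(2) s1(2) PHf(2)])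
    ultimately show ?thesis using ij unfolding realiz_def V'_def E'_def by simp
  qed
  have avH: "\<forall>e\<in>{e\<in>H. pos f' g' e}. v \<notin> e" "\<forall>e\<in>{e\<in>H. \<not> pos f' g' e}. v \<notin> e"
    using dist unfolding H_def E'_def by auto
  have abE': "{a,b} \<notin> E'" using nab E'_def by auto
  show ?thesis
  proof (cases "pos f' g' {a,b}")
    case True
    have p: "(f' a - f' b) * (g' a - g' b) > 0" using True pos_pair dist by metis
    obtain x y where xy: "x \<notin> f' ` V'" "y \<notin> g' ` V'" "(x - f' a) * (y - g' a) > 0"
      "(x - f' b) * (y - g' b) > 0" "(x - f' c) * (y - g' c) < 0"
      using G3[OF fF df dg p] by blast
    have pa: "pos (f'(v:=x)) (g'(v:=y)) {v,a}" using pos_v dist xy by metis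
    have pb: "pos (f'(v:=x)) (g'(v:=y)) {v,b}" using pos_v dist xy by metis
    have pc: "\<not> pos (f'(v:=x)) (g'(v:=y)) {v,c}" using pos_v[of c v f' x g' y] dist xy by simp
    have s1: "{e\<in>E. v \<notin> e \<and> pos f' g' e} \<union> {e\<in>E. v \<in> e \<and> pos (f'(v:=x)) (g'(v:=y)) e}
        = insert {v,a} (insert {v,b} ({e\<in>H. pos f' g' e} - {{a,b}}))"
    proof -
      have "{e\<in>E. v \<in> e \<and> pos (f'(v:=x)) (g'(v:=y)) e} = {e\<in>{e\<in>E. v \<in> e}. pos (f'(v:=x)) (g'(v:=y)) e}" by auto
      also have "\<dots> = {{v,a},{v,b}}" unfolding En using pa pb pc by auto
      finally have A: "{e\<in>E. v \<in> e \<and> pos (f'(v:=x)) (g'(v:=y)) e} = {{v,a},{v,b}}" .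
      have B: "{e\<in>E. v \<notin> e \<and> pos f' g' e} = {e\<in>H. pos f' g' e} - {{a,b}}"
        unfolding H_def E'_def using nab by auto
      show ?thesis unfolding A B by auto
    qed
    have s2: "{e\<in>E. v \<notin> e \<and> \<not> pos f' g' e} \<union> {e\<in>E. v \<in> e \<and> \<not> pos (f'(v:=x)) (g'(v:=y)) e}
        = insert {v,c} {e\<in>H. \<not> pos f' g' e}"
    proof -
      have "{e\<in>E. v \<in> e \<and> \<not> pos (f'(v:=x)) (g'(v:=y)) e} = {e\<in>{e\<in>E. v \<in> e}. \<not> pos (f'(v:=x)) (g'(v:=y)) e}" by auto
      also have "\<dots> = {{v,c}}" unfolding En using pa pb pc by auto
      finally have A: "{e\<in>E. v \<in> e \<and> \<not> pos (f'(v:=x)) (g'(v:=y)) e} = {{v,c}}" .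
      have B: "{e\<in>E. v \<notin> e \<and> \<not> pos f' g' e} = {e\<in>H. \<not> pos f' g' e}"
        unfolding H_def E'_def using True by auto
      show ?thesis unfolding A B by auto
    qed
    have P1: "sp 1 ({e\<in>E. v \<notin> e \<and> pos f' g' e} \<union> {e\<in>E. v \<in> e \<and> pos (f'(v:=x)) (g'(v:=y)) e})"
      unfolding s1 by (rule sp1_split[OF spP(1) PHf(1) _ avH(1) dist(1,2)[symmetric] dist(4)]) (use True H_def in simp)
    have P2: "sp 1 ({e\<in>E. v \<notin> e \<and> \<not> pos f' g' e} \<union> {e\<in>E. v \<in> e \<and> \<not> pos (f'(v:=x)) (g'(v:=y)) e})"
      unfolding s2 by (rule sp1_insert[OF spP(2) PHf(2) avH(2) dist(3)[symmetric]])
    have xy': "x \<notin> f' ` (V - {v})" "y \<notin> g' ` (V - {v})" using xy unfolding V'_def by simp_all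
    show ?thesis using ins[where f'=f' and g'=g' and x=x and y=y, OF gr v rE' xy' P1 P2] by blast
  next
    case False
    have p0: "(f' a - f' b) * (g' a - g' b) \<noteq> 0" using df dg by simp
    have p: "(f' a - f' b) * ((- g' a) - (- g' b)) > 0" using False pos_pair[of a b f' g'] dist p0
      by (simp add: algebra_simps)
    have fG: "finite (uminus ` (g' ` V'))" using fF by simp
    have dg': "- g' a \<noteq> - g' b" "- g' a \<noteq> - g' c" "- g' b \<noteq> - g' c" using dg by auto
    obtain x y0 where xy0: "x \<notin> f' ` V'" "y0 \<notin> uminus ` (g' ` V')" "(x - f' a) * (y0 - (- g' a)) > 0"
      "(x - f' b) * (y0 - (- g' b)) > 0" "(x - f' c) * (y0 - (- g' c)) < 0"
      using G3[where F="f' ` V'" and G="uminus ` (g' ` V')" and f=f' and g="\<lambda>u. - g' u" and a=a and b=b and c=c] fF(1) fG df dg' p by auto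
    define y where "y = - y0"
    have yn: "y \<notin> g' ` V'"
    proof
      assume "y \<in> g' ` V'" then have "- y \<in> uminus ` (g' ` V')" by blast
      then show False using xy0 y_def by simp
    qed
    have m: "\<And>u. (x - f' u) * (y - g' u) = - ((x - f' u) * (y0 - (- g' u)))" using y_def by (simp add: algebra_simps)
    have xy: "(x - f' a) * (y - g' a) < 0" "(x - f' b) * (y - g' b) < 0" "(x - f' c) * (y - g' c) > 0"
      using xy0 m by auto
    have pa: "\<not> pos (f'(v:=x)) (g'(v:=y)) {v,a}" using pos_v[of a v f' x g' y] dist xy by simp
    have pb: "\<not> pos (f'(v:=x)) (g'(v:=y)) {v,b}" using pos_v[of b v f' x g' y] dist xy by simp
    have pc: "pos (f'(v:=x)) (g'(v:=y)) {v,c}" using pos_v dist xy by metis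
    have s1: "{e\<in>E. v \<notin> e \<and> \<not> pos f' g' e} \<union> {e\<in>E. v \<in> e \<and> \<not> pos (f'(v:=x)) (g'(v:=y)) e}
        = insert {v,a} (insert {v,b} ({e\<in>H. \<not> pos f' g' e} - {{a,b}}))"
    proof -
      have "{e\<in>E. v \<in> e \<and> \<not> pos (f'(v:=x)) (g'(v:=y)) e} = {e\<in>{e\<in>E. v \<in> e}. \<not> pos (f'(v:=x)) (g'(v:=y)) e}" by auto
      also have "\<dots> = {{v,a},{v,b}}" unfolding En using pa pb pc by auto
      finally have A: "{e\<in>E. v \<in> e \<and> \<not> pos (f'(v:=x)) (g'(v:=y)) e} = {{v,a},{v,b}}" .
      have B: "{e\<in>E. v \<notin> e \<and> \<not> pos f' g' e} = {e\<in>H. \<not> pos f' g' e} - {{a,b}}"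
        unfolding H_def E'_def using nab by auto
      show ?thesis unfolding A B by auto
    qed
    have s2: "{e\<in>E. v \<notin> e \<and> pos f' g' e} \<union> {e\<in>E. v \<in> e \<and> pos (f'(v:=x)) (g'(v:=y)) e}
        = insert {v,c} {e\<in>H. pos f' g' e}"
    proof -
      have "{e\<in>E. v \<in> e \<and> pos (f'(v:=x)) (g'(v:=y)) e} = {e\<in>{e\<in>E. v \<in> e}. pos (f'(v:=x)) (g'(v:=y)) e}" by auto
      also have "\<dots> = {{v,c}}" unfolding En using pa pb pc by auto
      finally have A: "{e\<in>E. v \<in> e \<and> pos (f'(v:=x)) (g'(v:=y)) e} = {{v,c}}" .
      have B: "{e\<in>E. v \<notin> e \<and> pos f' g' e} = {e\<in>H. pos f' g' e}"
        unfolding H_def E'_def using False by auto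
      show ?thesis unfolding A B by auto
    qed
    have P2: "sp 1 ({e\<in>E. v \<notin> e \<and> \<not> pos f' g' e} \<union> {e\<in>E. v \<in> e \<and> \<not> pos (f'(v:=x)) (g'(v:=y)) e})"
      unfolding s1 by (rule sp1_split[OF spP(2) PHf(2) _ avH(2) dist(1,2)[symmetric] dist(4)]) (use False H_def in simp)
    have P1: "sp 1 ({e\<in>E. v \<notin> e \<and> pos f' g' e} \<union> {e\<in>E. v \<in> e \<and> pos (f'(v:=x)) (g'(v:=y)) e})"
      unfolding s2 by (rule sp1_insert[OF spP(1) PHf(1) avH(1) dist(3)[symmetric]])
    have xy': "x \<notin> f' ` (V - {v})" "y \<notin> g' ` (V - {v})" using xy0(1) yn unfolding V'_def by simp_all
    show ?thesis using ins[where f'=f' and g'=g' and x=x and y=y, OF gr v rE' xy' P1 P2] by blast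
  qed
qed

lemma case_K4:
  assumes V: "V = {v,a,b,c}" and dist: "a \<noteq> v" "b \<noteq> v" "c \<noteq> v" "a \<noteq> b" "a \<noteq> c" "b \<noteq> c"
    and gr: "gr V E"
    and inE: "{v,a} \<in> E" "{v,b} \<in> E" "{v,c} \<in> E" "{a,b} \<in> E" "{a,c} \<in> E" "{b,c} \<in> E"
  shows "\<exists>f g. realiz V E f g"
proof -
  have Eeq: "E = {{v,a},{v,b},{v,c},{a,b},{a,c},{b,c}}"
  proof
    show "{{v,a},{v,b},{v,c},{a,b},{a,c},{b,c}} \<subseteq> E" using inE by auto
    show "E \<subseteq> {{v,a},{v,b},{v,c},{a,b},{a,c},{b,c}}"
    proof
      fix e assume "e \<in> E"
      then have "e \<subseteq> V" "card e = 2" using gr unfolding gr_def by auto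
      then obtain x y where e: "e = {x,y}" "x \<noteq> y" by (meson card_2_iff)
      have "x \<in> V" "y \<in> V" using e \<open>e \<subseteq> V\<close> by auto
      then show "e \<in> {{v,a},{v,b},{v,c},{a,b},{a,c},{b,c}}" using e V by (auto simp: insert_commute)
    qed
  qed
  define f :: "'a \<Rightarrow> real" where "f = (\<lambda>u. if u = v then 1 else if u = a then 2 else if u = b then 3 else 4)"
  define g :: "'a \<Rightarrow> real" where "g = (\<lambda>u. if u = v then 2 else if u = a then 4 else if u = b then 1 else 3)"
  have fv: "f v = 1" "f a = 2" "f b = 3" "f c = 4" using dist unfolding f_def by auto
  have gv: "g v = 2" "g a = 4" "g b = 1" "g c = 3" using dist unfolding g_def by auto
  have injf: "inj_on f V" unfolding V using fv dist by (auto simp: inj_on_def)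
  have injg: "inj_on g V" unfolding V using gv dist by (auto simp: inj_on_def)
  have p1: "pos f g {v,a}" "pos f g {v,c}" "pos f g {b,c}"
    using fv gv dist by (simp_all add: pos_pair)
  have p2: "\<not> pos f g {v,b}" "\<not> pos f g {a,b}" "\<not> pos f g {a,c}"
    using fv gv dist by (simp_all add: pos_pair)
  have P: "{e\<in>E. pos f g e} = {{a,v},{v,c},{b,c}}" unfolding Eeq using p1 p2 by (auto simp: insert_commute)
  have N: "{e\<in>E. \<not> pos f g e} = {{v,b},{b,a},{a,c}}" unfolding Eeq using p1 p2 by (auto simp: insert_commute)
  have s1: "sp 1 {{b,c}}" using sp1_insert[OF sp_empty, of b c] dist by simp
  have s2: "sp 1 {{v,c},{b,c}}" using sp1_insert[OF s1, of v c] dist by simp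
  have s3: "sp 1 {{a,v},{v,c},{b,c}}" using sp1_insert[OF s2, of a v] dist by simp
  have t1: "sp 1 {{a,c}}" using sp1_insert[OF sp_empty, of a c] dist by simp
  have t2: "sp 1 {{b,a},{a,c}}" using sp1_insert[OF t1, of b a] dist by simp
  have t3: "sp 1 {{v,b},{b,a},{a,c}}" using sp1_insert[OF t2, of v b] dist by simp
  have "realiz V E f g" unfolding realiz_def P N using injf injg s3 t3 by blast
  then show ?thesis by blast
qed

lemma contract_N1:
  assumes gr: "gr V E" and sp: "sp 2 E" and XV: "X \<subseteq> V" and tX: "cnt E X + 2 = 2 * card X"
    and maxX: "\<forall>Y. Y \<subseteq> V \<longrightarrow> 2 \<le> card Y \<longrightarrow> Y \<noteq> V \<longrightarrow> cnt E Y + 2 = 2 * card Y \<longrightarrow> card Y \<le> card X"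
    and md: "\<forall>w\<in>V. 3 \<le> deg E w" and cX: "2 \<le> card X"
    and w: "w \<in> V" "w \<notin> X" and x: "x1 \<in> X" "x2 \<in> X" "{w,x1} \<in> E" "{w,x2} \<in> E"
  shows "x1 = x2"
proof (rule ccontr)
  assume ne: "x1 \<noteq> x2"
  have fV: "finite V" using gr gr_def by auto
  have fX: "finite X" using fV XV finite_subset by blast
  have fE: "finite E" using gr gr_finite by blast
  define Y where "Y = insert w X"
  have cY: "card Y = card X + 1" using Y_def fX w by simp
  have YV: "Y \<subseteq> V" using Y_def XV w by auto
  have n1: "{w,x1} \<notin> insert {w,x2} {e\<in>E. e \<subseteq> X}" using ne w by (auto simp: doubleton_eq_iff)
  have n2: "{w,x2} \<notin> {e\<in>E. e \<subseteq> X}" using w by auto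
  have ci: "card (insert {w,x1} (insert {w,x2} {e\<in>E. e \<subseteq> X})) = cnt E X + 2"
    using n1 n2 fE unfolding cnt_def by simp
  have sub: "insert {w,x1} (insert {w,x2} {e\<in>E. e \<subseteq> X}) \<subseteq> {e\<in>E. e \<subseteq> Y}"
    using x Y_def by auto
  have "cnt E X + 2 \<le> cnt E Y" using card_mono[OF _ sub] fE ci unfolding cnt_def by simp
  moreover have "cnt E Y + 2 \<le> 2 * card Y" using sp fX Y_def unfolding sp_def by blast
  ultimately have tY: "cnt E Y + 2 = 2 * card Y" using tX cY by linarith
  show False
  proof (cases "Y = V")
    case False
    then have "card Y \<le> card X" using maxX YV tY cY cX by auto
    then show False using cY by simp
  next
    case True
    have EV: "\<forall>e\<in>E. e \<subseteq> Y" using gr True unfolding gr_def by auto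
    have un: "{e\<in>E. e \<subseteq> Y} = {e\<in>E. e \<subseteq> X} \<union> {e\<in>E. w \<in> e}" using Y_def w EV by auto
    have dj: "{e\<in>E. e \<subseteq> X} \<inter> {e\<in>E. w \<in> e} = {}" using w by auto
    have "cnt E Y = cnt E X + deg E w" unfolding cnt_def deg_def un
      by (rule card_Un_disjoint) (use fE dj in auto)
    then show False using tY tX cY md w by fastforce
  qed
qed

lemma split11:
  assumes "finite S" "card S = 2" "S - X \<noteq> {}" "S \<inter> X \<noteq> {}"
  shows "card (S - X) = 1 \<and> card (S \<inter> X) = 1"
proof -
  have "card S = card (S - X) + card (S \<inter> X)" using assms(1)
    by (metis Int_commute add.commute card_Int_Diff)
  moreover have "card (S - X) > 0" "card (S \<inter> X) > 0" using assms by (auto simp: card_gt_0_iff)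
  ultimately show ?thesis using assms(2) by linarith
qed

lemma pi_inj:
  assumes E2: "\<forall>e\<in>E. e \<subseteq> V \<and> card e = 2" and x0: "x0 \<in> X"
    and N1: "\<forall>w\<in>V. w \<notin> X \<longrightarrow> (\<forall>x1\<in>X. \<forall>x2\<in>X. {w,x1} \<in> E \<longrightarrow> {w,x2} \<in> E \<longrightarrow> x1 = x2)"
  shows "inj_on (\<lambda>e. (\<lambda>u. if u \<in> X then x0 else u) ` e) {e\<in>E. \<not> e \<subseteq> X}"
proof (rule inj_onI)
  define p where "p = (\<lambda>u. if u \<in> X then x0 else u)"
  fix e e' assume e: "e \<in> {e\<in>E. \<not> e \<subseteq> X}" and e': "e' \<in> {e\<in>E. \<not> e \<subseteq> X}"
    and eq0: "(\<lambda>u. if u \<in> X then x0 else u) ` e = (\<lambda>u. if u \<in> X then x0 else u) ` e'"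
  have eq: "p ` e = p ` e'" using eq0 p_def by simp
  have D: "\<And>S. p ` S - {x0} = S - X"
  proof -
    fix S show "p ` S - {x0} = S - X"
    proof
      show "p ` S - {x0} \<subseteq> S - X" unfolding p_def by (auto split: if_splits)
      show "S - X \<subseteq> p ` S - {x0}" unfolding p_def using x0
        by (auto intro!: image_eqI)
    qed
  qed
  have OX: "e - X = e' - X" using D[of e] D[of e'] eq by simp
  have I: "\<And>S. x0 \<in> p ` S \<longleftrightarrow> S \<inter> X \<noteq> {}"
    unfolding p_def using x0 by (auto split: if_splits)
  have IX: "e \<inter> X \<noteq> {} \<longleftrightarrow> e' \<inter> X \<noteq> {}" using I[of e] I[of e'] eq by simp
  have ce: "card e = 2" "card e' = 2" "e \<subseteq> V" using e e' E2 by auto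
  have fe: "finite e" "finite e'" using ce by (auto intro: card_ge_0_finite)
  have split: "\<And>S. finite S \<Longrightarrow> card S = card (S - X) + card (S \<inter> X)"
    by (metis Int_commute add.commute card_Int_Diff)
  show "e = e'"
  proof (cases "e \<inter> X = {}")
    case True
    then have "e = e - X" "e' = e' - X" using IX by auto
    then show ?thesis using OX by simp
  next
    case False
    have o1: "e - X \<noteq> {}" using e by auto
    have c1: "card (e - X) = 1" "card (e \<inter> X) = 1"
      using split11[OF fe(1) ce(1) o1 False] by auto
    have c2: "card (e' - X) = 1" "card (e' \<inter> X) = 1"
    proof -
      have "e' - X \<noteq> {}" using e' by auto
      moreover have "e' \<inter> X \<noteq> {}" using IX False by simp
      ultimately show "card (e' - X) = 1" "card (e' \<inter> X) = 1"
        using split11[OF fe(2) ce(2)] by auto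
    qed
    obtain w where w: "e - X = {w}" using c1 card_1_singletonE by blast
    obtain y where y: "e \<inter> X = {y}" using c1 card_1_singletonE by blast
    obtain y' where y': "e' \<inter> X = {y'}" using c2 card_1_singletonE by blast
    have ee: "e = {w,y}" using w y by blast
    have ee': "e' = {w,y'}" using w y' OX by blast
    have "w \<in> V" "w \<notin> X" using w ce by auto
    moreover have "y \<in> X" "y' \<in> X" using y y' by auto
    moreover have "{w,y} \<in> E" "{w,y'} \<in> E" using e e' ee ee' by auto
    ultimately have "y = y'" using N1 by blast
    then show ?thesis using ee ee' by simp
  qed
qed

lemma sp1_combine:
  assumes fP: "finite P" and ne: "\<forall>e\<in>P. e \<noteq> {}" and x0: "x0 \<in> X"
    and inj: "inj_on (\<lambda>e. (\<lambda>u. if u \<in> X then x0 else u) ` e) {e\<in>P. \<not> e \<subseteq> X}"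
    and s2: "sp 1 {e\<in>P. e \<subseteq> X}"
    and s1: "sp 1 ((\<lambda>e. (\<lambda>u. if u \<in> X then x0 else u) ` e) ` {e\<in>P. \<not> e \<subseteq> X})"
  shows "sp 1 P"
  unfolding sp_def
proof (intro allI impI)
  define p where "p = (\<lambda>u. if u \<in> X then x0 else u)"
  define P1 where "P1 = (\<lambda>e. p ` e) ` {e\<in>P. \<not> e \<subseteq> X}"
  define P2 where "P2 = {e\<in>P. e \<subseteq> X}"
  have injp: "inj_on (\<lambda>e. p ` e) {e\<in>P. \<not> e \<subseteq> X}" using inj p_def by simp
  have s1': "sp 1 P1" using s1 P1_def p_def by simp
  fix Y :: "'a set" assume Y: "finite Y \<and> Y \<noteq> {}"
  define A where "A = {e\<in>P. e \<subseteq> X \<and> e \<subseteq> Y}"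
  define B where "B = {e\<in>P. \<not> e \<subseteq> X \<and> e \<subseteq> Y}"
  have cAB: "cnt P Y = card A + card B"
  proof -
    have "{e\<in>P. e \<subseteq> Y} = A \<union> B" unfolding A_def B_def by auto
    moreover have "A \<inter> B = {}" unfolding A_def B_def by auto
    moreover have "finite A" "finite B" using fP A_def B_def by auto
    ultimately show ?thesis unfolding cnt_def by (simp add: card_Un_disjoint)
  qed
  have cB: "card B \<le> cnt P1 (p ` Y)"
  proof -
    have "card B = card ((\<lambda>e. p ` e) ` B)"
      by (rule card_image[symmetric]) (rule inj_on_subset[OF injp], auto simp: B_def)
    also have "\<dots> \<le> cnt P1 (p ` Y)" unfolding cnt_def P1_def
      by (rule card_mono) (use fP B_def in auto)
    finally show ?thesis .
  qed
  have cA: "card A \<le> cnt P2 (Y \<inter> X)" unfolding cnt_def P2_def A_def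
    by (rule card_mono) (use fP in auto)
  have cY: "card Y = card (Y - X) + card (Y \<inter> X)" using Y
    by (metis Int_commute add.commute card_Int_Diff)
  show "cnt P Y + 1 \<le> 1 * card Y"
  proof (cases "Y \<inter> X = {}")
    case True
    have "A = {}" using ne True unfolding A_def by blast
    moreover have "p ` Y = Y" using True unfolding p_def by (auto intro!: image_eqI)
    moreover have "cnt P1 Y + 1 \<le> card Y" using s1' Y unfolding sp_def by auto
    ultimately show ?thesis using cAB cB by simp
  next
    case False
    have pY: "p ` Y = insert x0 (Y - X)" unfolding p_def using False x0 by (auto intro!: image_eqI)
    have cpY: "card (p ` Y) = card (Y - X) + 1" unfolding pY using Y x0 by simp
    have h1: "cnt P1 (p ` Y) + 1 \<le> card (p ` Y)" using s1' Y pY unfolding sp_def by auto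
    have h2: "cnt P2 (Y \<inter> X) + 1 \<le> card (Y \<inter> X)" using s2 Y False unfolding sp_def P2_def by auto
    show ?thesis using cAB cA cB h1 h2 cpY cY by linarith
  qed
qed

lemma contract_sp2:
  assumes gr: "gr V E" and sp: "sp 2 E" and XV: "X \<subseteq> V" and x0: "x0 \<in> X"
    and tX: "cnt E X + 2 = 2 * card X"
  shows "sp 2 ((\<lambda>e. (\<lambda>u. if u \<in> X then x0 else u) ` e) ` {e\<in>E. \<not> e \<subseteq> X})"
  unfolding sp_def
proof (intro allI impI)
  define p where "p = (\<lambda>u. if u \<in> X then x0 else u)"
  fix Y :: "'a set" assume Y: "finite Y \<and> Y \<noteq> {}"
  have fE: "finite E" using gr gr_finite by blast
  have fV: "finite V" using gr gr_def by auto
  have fX: "finite X" using fV XV finite_subset by blast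
  define S1 where "S1 = {e'\<in>(\<lambda>e. p ` e) ` {e\<in>E. \<not> e \<subseteq> X}. e' \<subseteq> Y}"
  have goal: "card S1 + 2 \<le> 2 * card Y"
  proof (cases "x0 \<in> Y")
    case False
    have "S1 \<subseteq> {e\<in>E. e \<subseteq> Y}"
    proof
      fix e' assume "e' \<in> S1"
      then obtain e where e: "e \<in> E" "e' = p ` e" "p ` e \<subseteq> Y" unfolding S1_def by auto
      have "\<forall>u\<in>e. u \<notin> X" using e False unfolding p_def by (auto split: if_splits)
      then have "p ` e = e" unfolding p_def by (auto intro!: image_eqI)
      then show "e' \<in> {e\<in>E. e \<subseteq> Y}" using e by auto
    qed
    then have "card S1 \<le> cnt E Y" unfolding cnt_def by (rule card_mono[rotated]) (use fE in simp)
    moreover have "cnt E Y + 2 \<le> 2 * card Y" using sp Y unfolding sp_def by blast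
    ultimately show ?thesis by linarith
  next
    case True
    define Y' where "Y' = (Y - {x0}) \<union> X"
    have "S1 \<subseteq> (\<lambda>e. p ` e) ` {e\<in>E. \<not> e \<subseteq> X \<and> e \<subseteq> Y'}"
    proof
      fix e' assume "e' \<in> S1"
      then obtain e where e: "e \<in> E" "\<not> e \<subseteq> X" "e' = p ` e" "p ` e \<subseteq> Y" unfolding S1_def by auto
      have "e \<subseteq> Y'"
      proof
        fix u assume "u \<in> e"
        show "u \<in> Y'"
        proof (cases "u \<in> X")
          case True then show ?thesis using Y'_def by simp
        next
          case False
          then have "p u = u" using p_def by simp
          moreover have "p u \<in> Y" using subsetD[OF e(4) imageI[OF \<open>u \<in> e\<close>]] .
          ultimately have "u \<in> Y" by simp
          then show ?thesis using False x0 Y'_def by auto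
        qed
      qed
      then show "e' \<in> (\<lambda>e. p ` e) ` {e\<in>E. \<not> e \<subseteq> X \<and> e \<subseteq> Y'}" using e by auto
    qed
    moreover have fin: "finite {e\<in>E. \<not> e \<subseteq> X \<and> e \<subseteq> Y'}" using fE by simp
    ultimately have "card S1 \<le> card ((\<lambda>e. p ` e) ` {e\<in>E. \<not> e \<subseteq> X \<and> e \<subseteq> Y'})"
      by (intro card_mono) simp_all
    also have "\<dots> \<le> card {e\<in>E. \<not> e \<subseteq> X \<and> e \<subseteq> Y'}" by (rule card_image_le[OF fin])
    finally have c1: "card S1 \<le> card {e\<in>E. \<not> e \<subseteq> X \<and> e \<subseteq> Y'}" .
    have un: "{e\<in>E. e \<subseteq> Y'} = {e\<in>E. e \<subseteq> X} \<union> {e\<in>E. \<not> e \<subseteq> X \<and> e \<subseteq> Y'}" using Y'_def by auto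
    have c2: "cnt E Y' = cnt E X + card {e\<in>E. \<not> e \<subseteq> X \<and> e \<subseteq> Y'}" unfolding cnt_def un
      by (rule card_Un_disjoint) (use fE in auto)
    have fY': "finite Y'" "Y' \<noteq> {}" using Y fX x0 Y'_def by auto
    have c3: "cnt E Y' + 2 \<le> 2 * card Y'" using sp fY' unfolding sp_def by blast
    have c4: "card Y' \<le> card (Y - {x0}) + card X" unfolding Y'_def by (rule card_Un_le)
    have c5: "card (Y - {x0}) = card Y - 1" "card Y \<ge> 1" using True Y by (simp, meson card_0_eq leI less_one)
    show ?thesis using c1 c2 c3 c4 c5 tX by linarith
  qed
  show "cnt ((\<lambda>e. (\<lambda>u. if u \<in> X then x0 else u) ` e) ` {e\<in>E. \<not> e \<subseteq> X}) Y + 2 \<le> 2 * card Y"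
    using goal unfolding cnt_def S1_def p_def .
qed

lemma blowup:
  fixes f1 g1 f2 g2 :: "'a \<Rightarrow> real"
  assumes "finite V1" "x0 \<in> V1" "finite X" "inj_on f1 V1" "inj_on g1 V1"
  shows "\<exists>\<delta>>0. \<forall>w\<in>V1 - {x0}. \<forall>u\<in>X.
     (f1 x0 + \<delta> * f2 u - f1 w > 0 \<longleftrightarrow> f1 x0 - f1 w > 0) \<and> f1 x0 + \<delta> * f2 u - f1 w \<noteq> 0 \<and>
     (g1 x0 + \<delta> * g2 u - g1 w > 0 \<longleftrightarrow> g1 x0 - g1 w > 0) \<and> g1 x0 + \<delta> * g2 u - g1 w \<noteq> 0"
proof -
  define D where "D = (\<lambda>w. \<bar>f1 x0 - f1 w\<bar>) ` (V1 - {x0}) \<union> (\<lambda>w. \<bar>g1 x0 - g1 w\<bar>) ` (V1 - {x0}) \<union> {1}"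
  have fD: "finite D" "D \<noteq> {}" using assms(1) D_def by auto
  have Dpos: "\<forall>t\<in>D. t > 0"
  proof
    fix t assume "t \<in> D"
    then show "t > 0" unfolding D_def using assms(2,4,5) by (auto simp: inj_on_eq_iff)
  qed
  define d where "d = Min D"
  have d0: "d > 0" using fD Dpos d_def by auto
  have dle: "\<And>w. w \<in> V1 - {x0} \<Longrightarrow> d \<le> \<bar>f1 x0 - f1 w\<bar> \<and> d \<le> \<bar>g1 x0 - g1 w\<bar>"
    using fD d_def D_def by auto
  define M where "M = Max ((\<lambda>u. \<bar>f2 u\<bar>) ` X \<union> (\<lambda>u. \<bar>g2 u\<bar>) ` X \<union> {1})"
  have fM: "finite ((\<lambda>u. \<bar>f2 u\<bar>) ` X \<union> (\<lambda>u. \<bar>g2 u\<bar>) ` X \<union> {1})" using assms(3) by auto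
  have M1: "M \<ge> 1" using fM M_def by (simp add: Max_ge_iff)
  have Mle: "\<And>u. u \<in> X \<Longrightarrow> \<bar>f2 u\<bar> \<le> M \<and> \<bar>g2 u\<bar> \<le> M" using fM M_def by auto
  define \<delta> where "\<delta> = d / (2 * M)"
  have d1: "\<delta> > 0" using d0 M1 \<delta>_def by simp
  have d2: "\<And>u. u \<in> X \<Longrightarrow> \<bar>\<delta> * f2 u\<bar> < d \<and> \<bar>\<delta> * g2 u\<bar> < d"
  proof -
    fix u assume u: "u \<in> X"
    have "\<bar>\<delta> * f2 u\<bar> = \<delta> * \<bar>f2 u\<bar>" using d1 by (simp add: abs_mult)
    also have "\<dots> \<le> \<delta> * M" using Mle[OF u] d1 by (simp add: mult_left_mono)
    also have "\<dots> = d / 2" using M1 \<delta>_def by simp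
    finally have a: "\<bar>\<delta> * f2 u\<bar> < d" using d0 by simp
    have "\<bar>\<delta> * g2 u\<bar> = \<delta> * \<bar>g2 u\<bar>" using d1 by (simp add: abs_mult)
    also have "\<dots> \<le> \<delta> * M" using Mle[OF u] d1 by (simp add: mult_left_mono)
    also have "\<dots> = d / 2" using M1 \<delta>_def by simp
    finally have b: "\<bar>\<delta> * g2 u\<bar> < d" using d0 by simp
    show "\<bar>\<delta> * f2 u\<bar> < d \<and> \<bar>\<delta> * g2 u\<bar> < d" using a b by simp
  qed
  show ?thesis
  proof (intro exI[of _ \<delta>] conjI d1 ballI)
    fix w u assume w: "w \<in> V1 - {x0}" and u: "u \<in> X"
    have h1: "\<bar>\<delta> * f2 u\<bar> < \<bar>f1 x0 - f1 w\<bar>" using dle[OF w] d2[OF u] by linarith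
    have h2: "\<bar>\<delta> * g2 u\<bar> < \<bar>g1 x0 - g1 w\<bar>" using dle[OF w] d2[OF u] by linarith
    have e1: "f1 x0 + \<delta> * f2 u - f1 w = (f1 x0 - f1 w) + \<delta> * f2 u" by simp
    have e2: "g1 x0 + \<delta> * g2 u - g1 w = (g1 x0 - g1 w) + \<delta> * g2 u" by simp
    show "(f1 x0 + \<delta> * f2 u - f1 w > 0 \<longleftrightarrow> f1 x0 - f1 w > 0)" "f1 x0 + \<delta> * f2 u - f1 w \<noteq> 0"
      "(g1 x0 + \<delta> * g2 u - g1 w > 0 \<longleftrightarrow> g1 x0 - g1 w > 0)" "g1 x0 + \<delta> * g2 u - g1 w \<noteq> 0"
      unfolding e1 e2 using sign_pert[OF h1] sign_pert[OF h2] by auto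
  qed
qed

lemma pos_transfer:
  fixes F G F' G' :: "'a \<Rightarrow> real"
  assumes "u \<noteq> w" "u' \<noteq> w'"
    and "(F u - F w > 0 \<longleftrightarrow> F' u' - F' w' > 0)" "F u - F w \<noteq> 0" "F' u' - F' w' \<noteq> 0"
    and "(G u - G w > 0 \<longleftrightarrow> G' u' - G' w' > 0)" "G u - G w \<noteq> 0" "G' u' - G' w' \<noteq> 0"
  shows "pos F G {u,w} \<longleftrightarrow> pos F' G' {u',w'}"
  using prod_sign[of "F u - F w" "F' u' - F' w'" "G u - G w" "G' u' - G' w'"] assms
  by (simp add: pos_pair)

lemma case_contract:
  fixes V :: "'a set" and E :: "'a set set"
  assumes gr: "gr V E" and sp: "sp 2 E" and XV: "X \<subseteq> V" and cX: "2 \<le> card X" and XnV: "X \<noteq> V"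
    and tX: "cnt E X + 2 = 2 * card X"
    and maxX: "\<forall>Y. Y \<subseteq> V \<longrightarrow> 2 \<le> card Y \<longrightarrow> Y \<noteq> V \<longrightarrow> cnt E Y + 2 = 2 * card Y \<longrightarrow> card Y \<le> card X"
    and md: "\<forall>w\<in>V. 3 \<le> deg E w"
    and IH: "\<And>(V'::'a set) E'. card V' < card V \<Longrightarrow> gr V' E' \<Longrightarrow> sp 2 E' \<Longrightarrow> \<exists>f g. realiz V' E' f g"
  shows "\<exists>f g. realiz V E f g"
proof -
  have fV: "finite V" using gr gr_def by auto
  have fX: "finite X" using fV XV finite_subset by blast
  have fE: "finite E" using gr gr_finite by blast
  have E2: "\<forall>e\<in>E. e \<subseteq> V \<and> card e = 2" using gr gr_def by auto
  obtain x0 where x0: "x0 \<in> X" using cX by fastforce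
  define p where "p = (\<lambda>u. if u \<in> X then x0 else u)"
  define V1 where "V1 = insert x0 (V - X)"
  define E1 where "E1 = (\<lambda>e. p ` e) ` {e\<in>E. \<not> e \<subseteq> X}"
  define E2' where "E2' = {e\<in>E. e \<subseteq> X}"
  have N1: "\<forall>w\<in>V. w \<notin> X \<longrightarrow> (\<forall>x1\<in>X. \<forall>x2\<in>X. {w,x1} \<in> E \<longrightarrow> {w,x2} \<in> E \<longrightarrow> x1 = x2)"
    using contract_N1[OF gr sp XV tX maxX md cX] by blast
  have injp: "inj_on (\<lambda>e. p ` e) {e\<in>E. \<not> e \<subseteq> X}"
    using pi_inj[OF E2 x0 N1] unfolding p_def .
  have pimg: "\<And>u w. p ` {u,w} = {p u, p w}" by simp
  have pne: "\<And>u w. u \<noteq> w \<Longrightarrow> \<not> (u \<in> X \<and> w \<in> X) \<Longrightarrow> p u \<noteq> p w"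
    unfolding p_def using x0 by auto
  have pV1: "\<And>u. u \<in> V \<Longrightarrow> p u \<in> V1" unfolding p_def V1_def by auto
  have grE1: "gr V1 E1" unfolding gr_def
  proof (intro conjI ballI)
    show "finite V1" using fV V1_def by simp
    fix e' assume "e' \<in> E1"
    then obtain e where e: "e \<in> E" "\<not> e \<subseteq> X" "e' = p ` e" unfolding E1_def by auto
    then obtain u w where uw: "e = {u,w}" "u \<noteq> w" using E2 by (meson card_2_iff)
    have "u \<in> V" "w \<in> V" using E2 e uw by auto
    then show "e' \<subseteq> V1" using e uw pV1 by auto
    show "card e' = 2" using e uw pne by auto
  qed
  have spE1: "sp 2 E1" using contract_sp2[OF gr sp XV x0 tX] unfolding E1_def p_def .
  have grE2: "gr X E2'" using fX E2 unfolding gr_def E2'_def by auto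
  have spE2: "sp 2 E2'" using sp_mono[OF sp _ fE] E2'_def by auto
  have cV1: "card V1 < card V"
  proof -
    have "card V1 \<le> card (V - X) + 1" unfolding V1_def by (simp add: card_insert_le_m1 card_insert_if)
    moreover have "card (V - X) = card V - card X" using card_Diff_subset[OF fX XV] .
    moreover have "card X \<le> card V" using card_mono[OF fV XV] .
    ultimately show ?thesis using cX by linarith
  qed
  have cXV: "card X < card V" using psubset_card_mono[OF fV] XV XnV by auto
  obtain f1 g1 where r1: "realiz V1 E1 f1 g1" using IH[of V1 E1] cV1 grE1 spE1 by blast
  obtain f2 g2 where r2: "realiz X E2' f2 g2" using IH[of X E2'] cXV grE2 spE2 by blast
  have ij1: "inj_on f1 V1" "inj_on g1 V1" using r1 realiz_def by auto
  have ij2: "inj_on f2 X" "inj_on g2 X" using r2 realiz_def by auto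
  have x0V1: "x0 \<in> V1" using V1_def by simp
  have fV1: "finite V1" using fV V1_def by simp
  obtain \<delta> where d0: "\<delta> > 0" and dK: "\<forall>w\<in>V1 - {x0}. \<forall>u\<in>X.
     (f1 x0 + \<delta> * f2 u - f1 w > 0 \<longleftrightarrow> f1 x0 - f1 w > 0) \<and> f1 x0 + \<delta> * f2 u - f1 w \<noteq> 0 \<and>
     (g1 x0 + \<delta> * g2 u - g1 w > 0 \<longleftrightarrow> g1 x0 - g1 w > 0) \<and> g1 x0 + \<delta> * g2 u - g1 w \<noteq> 0"
    using blowup[OF fV1 x0V1 fX ij1, of f2 g2] by blast
  define f where "f = (\<lambda>u. if u \<in> X then f1 x0 + \<delta> * f2 u else f1 u)"
  define g where "g = (\<lambda>u. if u \<in> X then g1 x0 + \<delta> * g2 u else g1 u)"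
  have K1: "\<And>u w. u \<in> X \<Longrightarrow> w \<in> V \<Longrightarrow> w \<notin> X \<Longrightarrow>
     (f u - f w > 0 \<longleftrightarrow> f1 x0 - f1 w > 0) \<and> f u - f w \<noteq> 0 \<and> (g u - g w > 0 \<longleftrightarrow> g1 x0 - g1 w > 0) \<and> g u - g w \<noteq> 0"
  proof -
    fix u w assume u: "u \<in> X" and w: "w \<in> V" "w \<notin> X"
    have "w \<in> V1 - {x0}" using w x0 V1_def by auto
    then show "(f u - f w > 0 \<longleftrightarrow> f1 x0 - f1 w > 0) \<and> f u - f w \<noteq> 0 \<and> (g u - g w > 0 \<longleftrightarrow> g1 x0 - g1 w > 0) \<and> g u - g w \<noteq> 0"
      using dK u w unfolding f_def g_def by simp
  qed
  have injf: "inj_on f V"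
  proof (rule inj_onI)
    fix u u' assume u: "u \<in> V" "u' \<in> V" and eq: "f u = f u'"
    show "u = u'"
    proof (cases "u \<in> X"; cases "u' \<in> X")
      assume "u \<in> X" "u' \<in> X"
      then have "f2 u = f2 u'" using eq d0 unfolding f_def by simp
      then show ?thesis using inj_on_eq_iff[OF ij2(1)] \<open>u \<in> X\<close> \<open>u' \<in> X\<close> by blast
    next
      assume "u \<in> X" "u' \<notin> X" then show ?thesis using K1[of u u'] u eq by simp
    next
      assume "u \<notin> X" "u' \<in> X" then show ?thesis using K1[of u' u] u eq by simp
    next
      assume "u \<notin> X" "u' \<notin> X"
      then have "f1 u = f1 u'" "u \<in> V1" "u' \<in> V1" using eq u unfolding f_def V1_def by auto
      then show ?thesis using inj_on_eq_iff[OF ij1(1)] by blast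
    qed
  qed
  have injg: "inj_on g V"
  proof (rule inj_onI)
    fix u u' assume u: "u \<in> V" "u' \<in> V" and eq: "g u = g u'"
    show "u = u'"
    proof (cases "u \<in> X"; cases "u' \<in> X")
      assume "u \<in> X" "u' \<in> X"
      then have "g2 u = g2 u'" using eq d0 unfolding g_def by simp
      then show ?thesis using inj_on_eq_iff[OF ij2(2)] \<open>u \<in> X\<close> \<open>u' \<in> X\<close> by blast
    next
      assume "u \<in> X" "u' \<notin> X" then show ?thesis using K1[of u u'] u eq by simp
    next
      assume "u \<notin> X" "u' \<in> X" then show ?thesis using K1[of u' u] u eq by simp
    next
      assume "u \<notin> X" "u' \<notin> X"
      then have "g1 u = g1 u'" "u \<in> V1" "u' \<in> V1" using eq u unfolding g_def V1_def by auto
      then show ?thesis using inj_on_eq_iff[OF ij1(2)] by blast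
    qed
  qed
  have K3: "\<And>e. e \<in> E \<Longrightarrow> e \<subseteq> X \<Longrightarrow> pos f g e \<longleftrightarrow> pos f2 g2 e"
  proof -
    fix e assume e: "e \<in> E" "e \<subseteq> X"
    then obtain u w where uw: "e = {u,w}" "u \<noteq> w" using E2 by (meson card_2_iff)
    have "u \<in> X" "w \<in> X" using e uw by auto
    then have "(f u - f w) * (g u - g w) = (\<delta> * \<delta>) * ((f2 u - f2 w) * (g2 u - g2 w))"
      unfolding f_def g_def by (simp add: algebra_simps)
    moreover have "\<delta> * \<delta> > 0" using d0 by simp
    ultimately show "pos f g e \<longleftrightarrow> pos f2 g2 e" unfolding uw using uw(2)
      by (simp add: pos_pair zero_less_mult_iff)
  qed
  have K4': "\<And>u w. u \<in> X \<Longrightarrow> w \<in> V \<Longrightarrow> w \<notin> X \<Longrightarrow> pos f g {u,w} \<longleftrightarrow> pos f1 g1 {x0,w}"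
  proof -
    fix u w assume u: "u \<in> X" and w: "w \<in> V" "w \<notin> X"
    have wV1: "w \<in> V1" using w V1_def by auto
    have ne: "x0 \<noteq> w" "u \<noteq> w" using x0 u w by auto
    have n1: "f1 x0 - f1 w \<noteq> 0" "g1 x0 - g1 w \<noteq> 0"
      using inj_on_eq_iff[OF ij1(1) x0V1 wV1] inj_on_eq_iff[OF ij1(2) x0V1 wV1] ne by auto
    show "pos f g {u,w} \<longleftrightarrow> pos f1 g1 {x0,w}"
      by (rule pos_transfer) (use K1[OF u w] ne n1 in auto)
  qed
  have K4: "\<And>e. e \<in> E \<Longrightarrow> \<not> e \<subseteq> X \<Longrightarrow> pos f g e \<longleftrightarrow> pos f1 g1 (p ` e)"
  proof -
    fix e assume e: "e \<in> E" "\<not> e \<subseteq> X"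
    then obtain u w where uw: "e = {u,w}" "u \<noteq> w" using E2 by (meson card_2_iff)
    have V: "u \<in> V" "w \<in> V" using E2 e uw by auto
    show "pos f g e \<longleftrightarrow> pos f1 g1 (p ` e)"
    proof (cases "u \<in> X")
      case True
      then have "w \<notin> X" using e uw by auto
      then show ?thesis using K4'[OF True V(2)] True unfolding uw p_def by (simp add: insert_commute)
    next
      case False
      show ?thesis
      proof (cases "w \<in> X")
        case True
        have "pos f g {u,w} \<longleftrightarrow> pos f1 g1 {x0,u}" using K4'[OF True V(1) False] by (simp add: insert_commute)
        then show ?thesis using True False unfolding uw p_def by (simp add: insert_commute)
      next
        case wF: False
        have "pos f g {u,w} = pos f1 g1 {u,w}" by (rule pos_cong) (use False wF f_def g_def in auto)
        then show ?thesis using False wF unfolding uw p_def by simp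
      qed
    qed
  qed
  have neE: "\<forall>e\<in>E. e \<noteq> {}" using E2 by auto
  have sp1P: "sp 1 {e\<in>E. pos f g e}"
  proof -
    have a: "{e\<in>{e\<in>E. pos f g e}. e \<subseteq> X} = {e\<in>E2'. pos f2 g2 e}" using K3 unfolding E2'_def by auto
    have b: "(\<lambda>e. p ` e) ` {e\<in>{e\<in>E. pos f g e}. \<not> e \<subseteq> X} = {e'\<in>E1. pos f1 g1 e'}"
      using K4 unfolding E1_def by auto
    have s2: "sp 1 {e\<in>{e\<in>E. pos f g e}. e \<subseteq> X}" unfolding a using r2 unfolding realiz_def by blast
    have s1: "sp 1 ((\<lambda>e. p ` e) ` {e\<in>{e\<in>E. pos f g e}. \<not> e \<subseteq> X})" unfolding b using r1 unfolding realiz_def by blast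
    have inj: "inj_on (\<lambda>e. p ` e) {e\<in>{e\<in>E. pos f g e}. \<not> e \<subseteq> X}" by (rule inj_on_subset[OF injp]) auto
    show ?thesis by (rule sp1_combine[OF _ _ x0]) (use fE neE inj s1 s2 p_def in auto)
  qed
  have sp1N: "sp 1 {e\<in>E. \<not> pos f g e}"
  proof -
    have a: "{e\<in>{e\<in>E. \<not> pos f g e}. e \<subseteq> X} = {e\<in>E2'. \<not> pos f2 g2 e}" using K3 unfolding E2'_def by auto
    have b: "(\<lambda>e. p ` e) ` {e\<in>{e\<in>E. \<not> pos f g e}. \<not> e \<subseteq> X} = {e'\<in>E1. \<not> pos f1 g1 e'}"
      using K4 unfolding E1_def by auto
    have s2: "sp 1 {e\<in>{e\<in>E. \<not> pos f g e}. e \<subseteq> X}" unfolding a using r2 unfolding realiz_def by blast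
    have s1: "sp 1 ((\<lambda>e. p ` e) ` {e\<in>{e\<in>E. \<not> pos f g e}. \<not> e \<subseteq> X})" unfolding b using r1 unfolding realiz_def by blast
    have inj: "inj_on (\<lambda>e. p ` e) {e\<in>{e\<in>E. \<not> pos f g e}. \<not> e \<subseteq> X}" by (rule inj_on_subset[OF injp]) auto
    show ?thesis by (rule sp1_combine[OF _ _ x0]) (use fE neE inj s1 s2 p_def in auto)
  qed
  have "realiz V E f g" unfolding realiz_def using injf injg sp1P sp1N by blast
  then show ?thesis by blast
qed

lemma claim:
  fixes V :: "'a set" and E :: "'a set set"
  shows "gr V E \<Longrightarrow> sp 2 E \<Longrightarrow> \<exists>f g. realiz V E f g"
proof (induction "card V" arbitrary: V E rule: less_induct)
  case less
  have gr: "gr V E" and sp: "sp 2 E" using less.prems by auto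
  have IH: "\<And>(V'::'a set) E'. card V' < card V \<Longrightarrow> gr V' E' \<Longrightarrow> sp 2 E' \<Longrightarrow> \<exists>f g. realiz V' E' f g"
    using less.hyps by blast
  have fV: "finite V" using gr gr_def by auto
  have fE: "finite E" using gr gr_finite by blast
  have E2: "\<forall>e\<in>E. e \<subseteq> V \<and> card e = 2" using gr gr_def by auto
  have IHv: "\<And>v E'. v \<in> V \<Longrightarrow> gr (V - {v}) E' \<Longrightarrow> sp 2 E' \<Longrightarrow> \<exists>f g. realiz (V - {v}) E' f g"
  proof -
    fix v E' assume "v \<in> V" "gr (V - {v}) E'" "sp 2 E'"
    moreover have "card (V - {v}) < card V" using fV \<open>v \<in> V\<close> by (meson card_Diff1_less)
    ultimately show "\<exists>f g. realiz (V - {v}) E' f g" using IH by blast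
  qed
  show ?case
  proof (cases "V = {}")
    case True
    then have "E = {}" using E2 by fastforce
    then have "realiz V E (\<lambda>_. 0) (\<lambda>_. 0)" unfolding realiz_def using True sp_empty by simp
    then show ?thesis by blast
  next
    case Vne: False
    show ?thesis
    proof (cases "\<exists>v\<in>V. deg E v \<le> 2")
      case True
      then obtain v where v: "v \<in> V" "deg E v \<le> 2" by blast
      have "sp 2 {e\<in>E. v \<notin> e}" using sp_mono[OF sp _ fE] by auto
      then have "\<exists>f g. realiz (V - {v}) {e\<in>E. v \<notin> e} f g" using IHv[OF v(1) gr_del[OF gr]] by blast
      then show ?thesis using case_low[OF gr sp v] by blast
    next
      case lowF: False
      then have md: "\<forall>w\<in>V. 3 \<le> deg E w" by auto
      show ?thesis
      proof (cases "\<exists>Y. Y \<subseteq> V \<and> 2 \<le> card Y \<and> Y \<noteq> V \<and> cnt E Y + 2 = 2 * card Y")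
        case True
        define P where "P = (\<lambda>Y. Y \<subseteq> V \<and> 2 \<le> card Y \<and> Y \<noteq> V \<and> cnt E Y + 2 = 2 * card Y)"
        obtain Y0 where Y0: "P Y0" using True P_def by blast
        have bnd: "\<forall>Y. P Y \<longrightarrow> card Y < Suc (card V)"
          using card_mono[OF fV] P_def by (simp add: le_imp_less_Suc)
        obtain X where X: "P X" and mx: "\<forall>Y. P Y \<longrightarrow> card Y \<le> card X"
          using Lattices_Big.ex_has_greatest_nat[of P Y0 card "Suc (card V)"] Y0 bnd by blast
        have XX: "X \<subseteq> V" "2 \<le> card X" "X \<noteq> V" "cnt E X + 2 = 2 * card X" using X P_def by auto
        have maxX: "\<forall>Y. Y \<subseteq> V \<longrightarrow> 2 \<le> card Y \<longrightarrow> Y \<noteq> V \<longrightarrow> cnt E Y + 2 = 2 * card Y \<longrightarrow> card Y \<le> card X"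
          using mx P_def by blast
        show ?thesis by (rule case_contract[OF gr sp XX maxX md IH])
      next
        case False
        then have nt: "\<forall>Y. Y \<subseteq> V \<longrightarrow> 2 \<le> card Y \<longrightarrow> Y \<noteq> V \<longrightarrow> cnt E Y + 2 \<noteq> 2 * card Y" by blast
        obtain v where v: "v \<in> V" "deg E v \<le> 3" using lowdeg[OF gr Vne sp] by blast
        then have "card {e\<in>E. v \<in> e} = 3" using md unfolding deg_def by fastforce
        then obtain e1 e2 e3 where ee: "{e\<in>E. v \<in> e} = {e1,e2,e3}" "e1 \<noteq> e2" "e2 \<noteq> e3" "e1 \<noteq> e3"
          unfolding card_3_iff by blast
        have "e1 \<in> E" "v \<in> e1" "e2 \<in> E" "v \<in> e2" "e3 \<in> E" "v \<in> e3" using ee(1) by blast+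
        then obtain a b c where abc: "a \<noteq> v" "e1 = {v,a}" "b \<noteq> v" "e2 = {v,b}" "c \<noteq> v" "e3 = {v,c}"
          using E2 edge_at by metis
        have dist: "a \<noteq> b" "a \<noteq> c" "b \<noteq> c" using abc ee by auto
        have En: "{e\<in>E. v \<in> e} = {{v,a},{v,b},{v,c}}" using ee abc by simp
        have inV: "a \<in> V" "b \<in> V" "c \<in> V" using E2 \<open>e1 \<in> E\<close> \<open>e2 \<in> E\<close> \<open>e3 \<in> E\<close> abc by auto
        have IHs: "\<And>E'. gr (V - {v}) E' \<Longrightarrow> sp 2 E' \<Longrightarrow> \<exists>f g. realiz (V - {v}) E' f g"
          using IHv[OF v(1)] by blast
        show ?thesis
        proof (cases "{a,b} \<in> E \<and> {a,c} \<in> E \<and> {b,c} \<in> E")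
          case True
          define K where "K = {v,a,b,c}"
          have six: "{{v,a},{v,b},{v,c},{a,b},{a,c},{b,c}} \<subseteq> {e\<in>E. e \<subseteq> K}"
            using True En K_def by auto
          have c6: "card {{v,a},{v,b},{v,c},{a,b},{a,c},{b,c}} = 6"
            using abc(1,3,5) dist by (simp add: doubleton_eq_iff)
          have "6 \<le> cnt E K" unfolding cnt_def using card_mono[OF _ six] fE c6 by simp
          moreover have cK: "card K = 4" using K_def abc(1,3,5) dist by simp
          moreover have "cnt E K + 2 \<le> 2 * card K"
          proof -
            have "finite K \<and> K \<noteq> {}" unfolding K_def by simp
            then show ?thesis using sp unfolding sp_def by blast
          qed
          ultimately have tK: "cnt E K + 2 = 2 * card K" by simp
          have KV: "K \<subseteq> V" using K_def inV v by auto
          have "K = V"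
          proof (rule ccontr)
            assume "K \<noteq> V" then show False using nt KV cK tK by auto
          qed
          then show ?thesis using case_K4[of V v a b c E] K_def abc dist gr True En by auto
        next
          case False
          show ?thesis
          proof (cases "{a,b} \<in> E")
            case nab: False
            show ?thesis by (rule case_split[OF gr sp v(1) En abc(1,3,5) dist nab nt IHs])
          next
            case True
            show ?thesis
            proof (cases "{a,c} \<in> E")
              case nac: False
              have En': "{e\<in>E. v \<in> e} = {{v,a},{v,c},{v,b}}" using En by auto
              show ?thesis by (rule case_split[OF gr sp v(1) En' abc(1,5,3) dist(2,1) dist(3)[symmetric] nac nt IHs])
            next
              case True
              then have nbc: "{b,c} \<notin> E" using False \<open>{a,b} \<in> E\<close> by auto
              have En': "{e\<in>E. v \<in> e} = {{v,b},{v,c},{v,a}}" using En by auto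
              show ?thesis by (rule case_split[OF gr sp v(1) En' abc(3,5,1) dist(3) dist(1)[symmetric] dist(2)[symmetric] nbc nt IHs])
            qed
          qed
        qed
      qed
    qed
  qed
qed



definition pt :: "real \<Rightarrow> real \<Rightarrow> real^2" where "pt a b = (\<chi> i. if i = 1 then a else b)"

lemma two_ne: "(2::2) \<noteq> 1" by simp

lemma pt_nth[simp]: "pt a b $ 1 = a" "pt a b $ 2 = b"
  unfolding pt_def by simp_all

lemma sgn_self: "(a::real) \<noteq> 0 \<Longrightarrow> sgn a * a = \<bar>a\<bar> \<and> (sgn a = 1 \<or> sgn a = -1)"
  by (cases "a > 0") (auto simp: sgn_if)

lemma other2: "(k::2) \<noteq> j \<Longrightarrow> (k = 1 \<and> j = 2) \<or> (k = 2 \<and> j = 1)"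
  using exhaust_2[of k] exhaust_2[of j] by auto

lemma linf_k: "(k::2) \<noteq> j \<Longrightarrow> \<bar>y $ j\<bar> < \<bar>y $ k\<bar> \<Longrightarrow> linf y = \<bar>y $ k\<bar>"
  using other2[of k j] unfolding linf_def by auto

lemma edge_deriv:
  fixes p :: "(real^2)^'a::finite" and k j :: 2
  assumes kj: "k \<noteq> j" and lt: "\<bar>(p$u - p$w)$j\<bar> < \<bar>(p$u - p$w)$k\<bar>"
  shows "(edge_len u w has_derivative (\<lambda>x. sgn ((p$u - p$w)$k) * ((x$u - x$w)$k))) (at p)"
proof -
  define s where "s = sgn ((p$u - p$w)$k)"
  have nz: "(p$u - p$w)$k \<noteq> 0" using lt by auto
  have s: "s * (p$u - p$w)$k = \<bar>(p$u - p$w)$k\<bar>" "s = 1 \<or> s = -1" using sgn_self[OF nz] s_def by auto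
  define U where "U = {x::(real^2)^'a. \<bar>(x$u - x$w)$j\<bar> < s * (x$u - x$w)$k}"
  have oU: "open U" unfolding U_def
    by (intro open_Collect_less continuous_intros)
  have pU: "p \<in> U" unfolding U_def using s lt by simp
  have lin: "linear (\<lambda>x::(real^2)^'a. s * ((x$u - x$w)$k))"
    by (rule linearI) (simp_all add: algebra_simps)
  have hd: "((\<lambda>x::(real^2)^'a. s * ((x$u - x$w)$k)) has_derivative (\<lambda>x. s * ((x$u - x$w)$k))) (at p)"
    by (rule bounded_linear_imp_has_derivative) (use lin linear_conv_bounded_linear in blast)
  have eq: "\<And>x. x \<in> U \<Longrightarrow> s * ((x$u - x$w)$k) = edge_len u w x"
  proof -
    fix x assume "x \<in> U"
    then have a: "\<bar>(x$u - x$w)$j\<bar> < s * (x$u - x$w)$k" unfolding U_def by simp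
    then have b: "s * (x$u - x$w)$k = \<bar>(x$u - x$w)$k\<bar>" using s(2) by auto
    then have "linf (x$u - x$w) = \<bar>(x$u - x$w)$k\<bar>" using linf_k[OF kj] a by simp
    then show "s * ((x$u - x$w)$k) = edge_len u w x" unfolding edge_len_def using b by simp
  qed
  show ?thesis using has_derivative_transform_within_open[OF hd oU pU eq] unfolding s_def .
qed

lemma absl1: "(a::real) * b > 0 \<Longrightarrow> \<bar>a - b\<bar> < \<bar>a + b\<bar>"
  by (cases "a > 0"; cases "b > 0") (auto simp: zero_less_mult_iff)

lemma absl2: "(a::real) * b < 0 \<Longrightarrow> \<bar>a + b\<bar> < \<bar>a - b\<bar>"
  by (cases "a > 0"; cases "b > 0") (auto simp: mult_less_0_iff)

definition mkp :: "('a::finite \<Rightarrow> real) \<Rightarrow> ('a \<Rightarrow> real) \<Rightarrow> (real^2)^'a" where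
  "mkp f g = (\<chi> v. pt (f v + g v) (f v - g v))"

lemma mkp_d: "(mkp f g $ u - mkp f g $ w) $ 1 = (f u - f w) + (g u - g w)"
  "(mkp f g $ u - mkp f g $ w) $ 2 = (f u - f w) - (g u - g w)"
  unfolding mkp_def by simp_all

lemma mkp_abs:
  "(f u - f w) * (g u - g w) > 0 \<Longrightarrow> \<bar>(mkp f g $ u - mkp f g $ w) $ 2\<bar> < \<bar>(mkp f g $ u - mkp f g $ w) $ 1\<bar>"
  "(f u - f w) * (g u - g w) < 0 \<Longrightarrow> \<bar>(mkp f g $ u - mkp f g $ w) $ 1\<bar> < \<bar>(mkp f g $ u - mkp f g $ w) $ 2\<bar>"
  unfolding mkp_d using absl1 absl2 by auto

lemma fd_pos:
  assumes "(f u - f w) * (g u - g w) > 0"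
  shows "frechet_derivative (edge_len u w) (at (mkp f g)) =
    (\<lambda>x. sgn ((mkp f g $ u - mkp f g $ w) $ 1) * ((x$u - x$w)$1))"
proof -
  have "(edge_len u w has_derivative (\<lambda>x. sgn ((mkp f g $ u - mkp f g $ w) $ 1) * ((x$u - x$w)$1))) (at (mkp f g))"
    by (rule edge_deriv) (use mkp_abs(1)[OF assms] in auto)
  then show ?thesis by (rule frechet_derivative_at[symmetric])
qed

lemma fd_neg:
  assumes "(f u - f w) * (g u - g w) < 0"
  shows "frechet_derivative (edge_len u w) (at (mkp f g)) =
    (\<lambda>x. sgn ((mkp f g $ u - mkp f g $ w) $ 2) * ((x$u - x$w)$2))"
proof -
  have "(edge_len u w has_derivative (\<lambda>x. sgn ((mkp f g $ u - mkp f g $ w) $ 2) * ((x$u - x$w)$2))) (at (mkp f g))"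
    by (rule edge_deriv) (use mkp_abs(2)[OF assms] in auto)
  then show ?thesis by (rule frechet_derivative_at[symmetric])
qed

lemma conn:
  assumes fV: "finite V" and P: "\<forall>e\<in>P. e \<subseteq> V \<and> card e = 2" and sp: "sp 1 P"
    and cP: "card P + 1 = card V" and h: "\<forall>e\<in>P. \<forall>u\<in>e. \<forall>w\<in>e. h u = h w"
    and u0: "u0 \<in> V" and w0: "w0 \<in> V"
  shows "h u0 = h w0"
proof (rule ccontr)
  assume ne: "h u0 \<noteq> h w0"
  define X where "X = {v\<in>V. h v = h u0}"
  define Y where "Y = V - X"
  have fP: "finite P" using fV P by (meson Pow_iff finite_Pow_iff rev_finite_subset subsetI)
  have XY: "finite X" "X \<noteq> {}" "finite Y" "Y \<noteq> {}" using fV u0 w0 ne X_def Y_def by auto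
  have XV: "X \<subseteq> V" using X_def by auto
  have cV: "card V = card X + card Y"
    using card_Diff_subset[OF XY(1) XV] card_mono[OF fV XV] unfolding Y_def by linarith
  have sub: "P \<subseteq> {e\<in>P. e \<subseteq> X} \<union> {e\<in>P. e \<subseteq> Y}"
  proof
    fix e assume e: "e \<in> P"
    have "card e = 2" using P e by blast
    then have "e \<noteq> {}" by auto
    then obtain z where z: "z \<in> e" by auto
    show "e \<in> {e\<in>P. e \<subseteq> X} \<union> {e\<in>P. e \<subseteq> Y}"
    proof (cases "h z = h u0")
      case True
      have "\<forall>w\<in>e. h w = h u0" using h e z True by metis
      then have "e \<subseteq> X" using e P X_def by auto
      then show ?thesis using e by simp
    next
      case False
      have "\<forall>w\<in>e. h w \<noteq> h u0" using h e z False by metis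
      then have "e \<subseteq> Y" using e P X_def Y_def by auto
      then show ?thesis using e by simp
    qed
  qed
  have "card P \<le> card ({e\<in>P. e \<subseteq> X} \<union> {e\<in>P. e \<subseteq> Y})" by (rule card_mono) (use fP sub in auto)
  also have "\<dots> \<le> cnt P X + cnt P Y" unfolding cnt_def by (rule card_Un_le)
  finally have a: "card P \<le> cnt P X + cnt P Y" .
  have "cnt P X + 1 \<le> card X" "cnt P Y + 1 \<le> card Y" using sp XY unfolding sp_def by auto
  then show False using a cP cV by linarith
qed

lemma two_el: "card e = 2 \<Longrightarrow> u \<in> e \<Longrightarrow> w \<in> e \<Longrightarrow> u \<noteq> w \<Longrightarrow> e = {u,w}"
  by (auto simp: card_2_iff)

lemma cut:
  fixes P :: "'a::finite set set"
  assumes sp: "sp 1 P" and P2: "\<forall>e\<in>P. card e = 2" and ab: "{a,b} \<in> P" "a \<noteq> b"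
  shows "\<exists>X. a \<in> X \<and> b \<notin> X \<and> (\<forall>e\<in>P - {{a,b}}. e \<subseteq> X \<or> e \<inter> X = {})"
proof -
  define P' where "P' = P - {{a,b}}"
  have fP: "finite P" "finite P'" using P'_def by auto
  have sp': "sp 1 P'" using sp_mono[OF sp _ fP(1)] P'_def by auto
  define T where "T = (\<lambda>X. a \<in> X \<and> b \<notin> X \<and> cnt P' X + 1 = card X)"
  have "{e\<in>P'. e \<subseteq> {a}} = {}"
  proof -
    have "\<And>e. e \<in> P' \<Longrightarrow> \<not> e \<subseteq> {a}"
    proof
      fix e assume "e \<in> P'" "e \<subseteq> {a}"
      then have "card e \<le> card {a}" by (intro card_mono) auto
      then show False using P2 \<open>e \<in> P'\<close> P'_def by auto
    qed
    then show ?thesis by auto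
  qed
  then have Ta: "T {a}" unfolding T_def cnt_def using ab by simp
  have bnd: "\<forall>Y. T Y \<longrightarrow> card Y < Suc (card (UNIV::'a set))"
    by (simp add: card_mono le_imp_less_Suc)
  obtain X where X: "T X" and mx: "\<forall>Y. T Y \<longrightarrow> card Y \<le> card X"
    using Lattices_Big.ex_has_greatest_nat[of T "{a}" card "Suc (card (UNIV::'a set))"] Ta bnd by blast
  have XX: "a \<in> X" "b \<notin> X" "cnt P' X + 1 = card X" using X T_def by auto
  have "\<forall>e\<in>P'. e \<subseteq> X \<or> e \<inter> X = {}"
  proof (rule ccontr)
    assume "\<not> ?thesis"
    then obtain e u w where e: "e \<in> P'" "u \<in> e" "u \<in> X" "w \<in> e" "w \<notin> X" by blast
    have ee: "e = {u,w}" using two_el[of e u w] e P2 P'_def by auto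
    show False
    proof (cases "w = b")
      case True
      have sub: "insert e (insert {a,b} {e'\<in>P'. e' \<subseteq> X}) \<subseteq> {e'\<in>P. e' \<subseteq> insert b X}"
        using e ab XX P'_def ee True by auto
      have n1: "{a,b} \<notin> {e'\<in>P'. e' \<subseteq> X}" using P'_def by auto
      have n2: "e \<notin> insert {a,b} {e'\<in>P'. e' \<subseteq> X}" using e P'_def by auto
      have "card (insert e (insert {a,b} {e'\<in>P'. e' \<subseteq> X})) = cnt P' X + 2"
        using n1 n2 fP unfolding cnt_def by simp
      moreover have "card (insert e (insert {a,b} {e'\<in>P'. e' \<subseteq> X})) \<le> card {e'\<in>P. e' \<subseteq> insert b X}"
        by (rule card_mono[OF _ sub]) (simp add: fP)
      ultimately have "cnt P' X + 2 \<le> cnt P (insert b X)" unfolding cnt_def by linarith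
      moreover have "cnt P (insert b X) + 1 \<le> card (insert b X)"
      proof -
        have "finite (insert b X) \<and> insert b X \<noteq> {}" by simp
        then show ?thesis using sp[unfolded sp_def, rule_format] by simp
      qed
      moreover have "card (insert b X) = card X + 1" using XX by simp
      ultimately show False using XX by linarith
    next
      case False
      define Y where "Y = insert w X"
      have sub: "insert e {e'\<in>P'. e' \<subseteq> X} \<subseteq> {e'\<in>P'. e' \<subseteq> Y}"
        using e Y_def P'_def ee by auto
      have n2: "e \<notin> {e'\<in>P'. e' \<subseteq> X}" using e by auto
      have "card (insert e {e'\<in>P'. e' \<subseteq> X}) = cnt P' X + 1" using n2 fP unfolding cnt_def by simp
      moreover have "card (insert e {e'\<in>P'. e' \<subseteq> X}) \<le> card {e'\<in>P'. e' \<subseteq> Y}"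
        by (rule card_mono[OF _ sub]) (simp add: fP)
      ultimately have c1: "cnt P' X + 1 \<le> cnt P' Y" unfolding cnt_def by linarith
      have c2: "cnt P' Y + 1 \<le> card Y"
      proof -
        have "finite Y \<and> Y \<noteq> {}" using Y_def by simp
        then show ?thesis using sp'[unfolded sp_def, rule_format] by simp
      qed
      have c3: "card Y = card X + 1" using Y_def e by simp
      have "T Y" unfolding T_def using XX False c1 c2 c3 Y_def by auto
      then show False using mx c3 by fastforce
    qed
  qed
  then show ?thesis using XX P'_def by blast
qed

lemma pair_ne: "card {u,w} = 2 \<Longrightarrow> u \<noteq> w"
  by auto

lemma set2_eq: "Q (1::2) \<Longrightarrow> \<not> Q 2 \<Longrightarrow> {k. Q k} = {1}"
proof (rule set_eqI)
  fix k :: 2 assume "Q 1" "\<not> Q 2" then show "k \<in> {k. Q k} \<longleftrightarrow> k \<in> {1}" using exhaust_2[of k] by auto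
qed

lemma set2_eq': "Q (2::2) \<Longrightarrow> \<not> Q 1 \<Longrightarrow> {k. Q k} = {2}"
proof (rule set_eqI)
  fix k :: 2 assume "Q 2" "\<not> Q 1" then show "k \<in> {k. Q k} \<longleftrightarrow> k \<in> {2}" using exhaust_2[of k] by auto
qed

theorem corollary4p4:
  fixes E :: "'a::finite set set"
  assumes "simple_graph E" and "tight22 E"
  shows "\<exists>p::(real^2)^'a. placement p \<and> well_positioned E p \<and> minimally_rigid E p"
proof -
  have E2: "\<forall>e\<in>E. card e = 2" using assms(1) simple_graph_def by auto
  have grE: "gr (UNIV::'a set) E" unfolding gr_def using E2 by auto
  have t: "int (card E) = 2 * int (card (UNIV::'a set)) - 2"
    and tX: "\<forall>X::'a set. X \<noteq> {} \<longrightarrow> int (induced_edges E X) \<le> 2 * int (card X) - 2"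
    using assms(2) unfolding tight22_def by auto
  have spE: "sp 2 E" unfolding sp_def
  proof (intro allI impI)
    fix X :: "'a set" assume X: "finite X \<and> X \<noteq> {}"
    then have "int (cnt E X) \<le> 2 * int (card X) - 2" using tX unfolding induced_edges_def cnt_def by auto
    then show "cnt E X + 2 \<le> 2 * card X" by linarith
  qed
  obtain f g where r: "realiz UNIV E f g" using claim[OF grE spE] by blast
  define n where "n = card (UNIV::'a set)"
  define P where "P = {e\<in>E. pos f g e}"
  define N where "N = {e\<in>E. \<not> pos f g e}"
  have injf: "inj f" and injg: "inj g" and spP: "sp 1 P" and spN: "sp 1 N"
    using r unfolding realiz_def P_def N_def by auto
  have fE: "finite E" by simp
  have n1: "n \<ge> 1" unfolding n_def by (simp add: Suc_le_eq)
  have cE: "card E + 2 = 2 * n" using t n1 unfolding n_def by linarith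
  have cPN: "card P + card N = card E"
  proof -
    have "P \<union> N = E" "P \<inter> N = {}" unfolding P_def N_def by auto
    then show ?thesis using card_Un_disjoint[of P N] fE by (metis finite_Un)
  qed
  have cP: "card P + 1 \<le> n"
  proof -
    have "cnt P UNIV = card P" unfolding cnt_def by simp
    then show ?thesis using spP unfolding sp_def n_def by (metis UNIV_not_empty finite mult_1)
  qed
  have cN: "card N + 1 \<le> n"
  proof -
    have "cnt N UNIV = card N" unfolding cnt_def by simp
    then show ?thesis using spN unfolding sp_def n_def by (metis UNIV_not_empty finite mult_1)
  qed
  have cP': "card P + 1 = card (UNIV::'a set)" using cP cN cPN cE n_def by linarith
  have cN': "card N + 1 = card (UNIV::'a set)" using cP cN cPN cE n_def by linarith
  define p where "p = mkp f g"
  have ne: "\<And>u w. {u,w} \<in> E \<Longrightarrow> u \<noteq> w"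
  proof -
    fix u w assume "{u,w} \<in> E"
    then have "card {u,w} = 2" using E2 by blast
    then show "u \<noteq> w" by (rule pair_ne)
  qed
  have dnz: "\<And>u w. u \<noteq> w \<Longrightarrow> (f u - f w) * (g u - g w) \<noteq> 0"
    using injf injg by (simp add: inj_eq)
  have FDp: "\<And>u w. {u,w} \<in> E \<Longrightarrow> pos f g {u,w} \<Longrightarrow>
     frechet_derivative (edge_len u w) (at p) = (\<lambda>x. sgn ((p $ u - p $ w) $ 1) * ((x$u - x$w)$1))
     \<and> (p $ u - p $ w) $ 1 \<noteq> 0 \<and> \<bar>(p $ u - p $ w) $ 2\<bar> < \<bar>(p $ u - p $ w) $ 1\<bar>"
  proof -
    fix u w assume e: "{u,w} \<in> E" and ps: "pos f g {u,w}"
    have pr: "(f u - f w) * (g u - g w) > 0" using ps pos_pair ne[OF e] by metis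
    show "frechet_derivative (edge_len u w) (at p) = (\<lambda>x. sgn ((p $ u - p $ w) $ 1) * ((x$u - x$w)$1))
     \<and> (p $ u - p $ w) $ 1 \<noteq> 0 \<and> \<bar>(p $ u - p $ w) $ 2\<bar> < \<bar>(p $ u - p $ w) $ 1\<bar>"
      using fd_pos[OF pr] mkp_abs(1)[OF pr] unfolding p_def by auto
  qed
  have FDn: "\<And>u w. {u,w} \<in> E \<Longrightarrow> \<not> pos f g {u,w} \<Longrightarrow>
     frechet_derivative (edge_len u w) (at p) = (\<lambda>x. sgn ((p $ u - p $ w) $ 2) * ((x$u - x$w)$2))
     \<and> (p $ u - p $ w) $ 2 \<noteq> 0 \<and> \<bar>(p $ u - p $ w) $ 1\<bar> < \<bar>(p $ u - p $ w) $ 2\<bar>"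
  proof -
    fix u w assume e: "{u,w} \<in> E" and ps: "\<not> pos f g {u,w}"
    have "\<not> (f u - f w) * (g u - g w) > 0" using ps pos_pair ne[OF e] by metis
    then have pr: "(f u - f w) * (g u - g w) < 0" using dnz[OF ne[OF e]] by linarith
    show "frechet_derivative (edge_len u w) (at p) = (\<lambda>x. sgn ((p $ u - p $ w) $ 2) * ((x$u - x$w)$2))
     \<and> (p $ u - p $ w) $ 2 \<noteq> 0 \<and> \<bar>(p $ u - p $ w) $ 1\<bar> < \<bar>(p $ u - p $ w) $ 2\<bar>"
      using fd_neg[OF pr] mkp_abs(2)[OF pr] unfolding p_def by auto
  qed
  have plc: "placement p" unfolding placement_def
  proof (rule injI)
    fix u w assume "p $ u = p $ w"
    then have "(p $ u) $ 1 = (p $ w) $ 1" "(p $ u) $ 2 = (p $ w) $ 2" by simp_all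
    then have "f u = f w" unfolding p_def mkp_def by simp
    then show "u = w" using injf by (simp add: inj_eq)
  qed
  have wp: "well_positioned E p" unfolding well_positioned_def
  proof (intro allI impI)
    fix u w assume e: "{u,w} \<in> E"
    show "card {k::2. linf (p $ u - p $ w) = \<bar>(p $ u - p $ w) $ k\<bar>} = 1"
    proof (cases "pos f g {u,w}")
      case True
      then have lt: "\<bar>(p $ u - p $ w) $ 2\<bar> < \<bar>(p $ u - p $ w) $ 1\<bar>" using FDp[OF e] by blast
      have "linf (p $ u - p $ w) = \<bar>(p $ u - p $ w) $ 1\<bar>" by (rule linf_k) (use lt in auto)
      then have "{k::2. linf (p $ u - p $ w) = \<bar>(p $ u - p $ w) $ k\<bar>} = {1}"
        by (intro set2_eq) (use lt in auto)
      then show ?thesis by simp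
    next
      case False
      then have lt: "\<bar>(p $ u - p $ w) $ 1\<bar> < \<bar>(p $ u - p $ w) $ 2\<bar>" using FDn[OF e] by blast
      have "linf (p $ u - p $ w) = \<bar>(p $ u - p $ w) $ 2\<bar>" by (rule linf_k) (use lt in auto)
      then have "{k::2. linf (p $ u - p $ w) = \<bar>(p $ u - p $ w) $ k\<bar>} = {2}"
        by (intro set2_eq') (use lt in auto)
      then show ?thesis by simp
    qed
  qed
  have P2: "\<forall>e\<in>P. e \<subseteq> UNIV \<and> card e = 2" "\<forall>e\<in>N. e \<subseteq> UNIV \<and> card e = 2"
    using E2 unfolding P_def N_def by auto
  have rig: "rigid E p" unfolding rigid_def
  proof (intro allI impI)
    fix x :: "(real^2)^'a"
    assume H: "\<forall>u w. {u,w} \<in> E \<longrightarrow> frechet_derivative (edge_len u w) (at p) x = 0"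
    have h1: "\<forall>e\<in>P. \<forall>u\<in>e. \<forall>w\<in>e. (x$u)$1 = (x$w)$1"
    proof (intro ballI)
      fix e u w assume e: "e \<in> P" "u \<in> e" "w \<in> e"
      show "(x$u)$1 = (x$w)$1"
      proof (cases "u = w")
        case False
        have "card e = 2" using e(1) E2 unfolding P_def by auto
        then have ee: "e = {u,w}" using two_el[OF _ e(2,3) False] by blast
        then have eE: "{u,w} \<in> E" "pos f g {u,w}" using e P_def by auto
        have "sgn ((p $ u - p $ w) $ 1) * ((x$u - x$w)$1) = 0" using H FDp[OF eE] eE(1) by metis
        then show ?thesis using FDp[OF eE] by (simp add: sgn_zero_iff)
      qed simp
    qed
    have h2: "\<forall>e\<in>N. \<forall>u\<in>e. \<forall>w\<in>e. (x$u)$2 = (x$w)$2"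
    proof (intro ballI)
      fix e u w assume e: "e \<in> N" "u \<in> e" "w \<in> e"
      show "(x$u)$2 = (x$w)$2"
      proof (cases "u = w")
        case False
        have "card e = 2" using e(1) E2 unfolding N_def by auto
        then have ee: "e = {u,w}" using two_el[OF _ e(2,3) False] by blast
        then have eE: "{u,w} \<in> E" "\<not> pos f g {u,w}" using e N_def by auto
        have "sgn ((p $ u - p $ w) $ 2) * ((x$u - x$w)$2) = 0" using H FDn[OF eE] eE(1) by metis
        then show ?thesis using FDn[OF eE] by (simp add: sgn_zero_iff)
      qed simp
    qed
    fix v0 :: 'a
    have "\<forall>v. x$v = x$v0"
    proof
      fix v
      have "(x$v)$1 = (x$v0)$1" using conn[OF _ P2(1) spP cP' h1] by simp
      moreover have "(x$v)$2 = (x$v0)$2" using conn[OF _ P2(2) spN cN' h2] by simp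
      ultimately show "x$v = x$v0" by (simp add: vec_eq_iff forall_2)
    qed
    then show "\<exists>a. \<forall>v. x$v = a" by blast
  qed
  have mr: "\<forall>e\<in>E. \<not> rigid (E - {e}) p"
  proof
    fix e assume eE: "e \<in> E"
    then obtain a b where ab: "e = {a,b}" "a \<noteq> b" using E2 by (meson card_2_iff)
    show "\<not> rigid (E - {e}) p"
    proof (cases "pos f g e")
      case True
      then have "{a,b} \<in> P" using eE ab P_def by auto
      then obtain X where X: "a \<in> X" "b \<notin> X" "\<forall>e'\<in>P - {{a,b}}. e' \<subseteq> X \<or> e' \<inter> X = {}"
        using cut[OF spP _ _ ab(2)] E2 P_def by auto
      define x :: "(real^2)^'a" where "x = (\<chi> v. if v \<in> X then pt 1 0 else 0)"
      have z: "\<forall>u w. {u,w} \<in> E - {e} \<longrightarrow> frechet_derivative (edge_len u w) (at p) x = 0"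
      proof (intro allI impI)
        fix u w assume uw: "{u,w} \<in> E - {e}"
        then have uwE: "{u,w} \<in> E" by simp
        show "frechet_derivative (edge_len u w) (at p) x = 0"
        proof (cases "pos f g {u,w}")
          case True
          have i1: "{u,w} \<in> P" using uwE True unfolding P_def by simp
          have i2: "{u,w} \<noteq> {a,b}" using uw ab(1) by simp
          have i3: "{u,w} \<in> P - {{a,b}}" using i1 i2 by simp
          have "{u,w} \<subseteq> X \<or> {u,w} \<inter> X = {}" using bspec[OF X(3) i3] .
          then have "(u \<in> X) = (w \<in> X)" by auto
          then have "(x$u - x$w)$1 = 0" unfolding x_def by simp
          then show ?thesis using FDp[OF uwE True] by simp
        next
          case False
          have "(x$u - x$w)$2 = 0" unfolding x_def by simp
          then show ?thesis using FDn[OF uwE False] by simp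
        qed
      qed
      have nc: "\<not> (\<exists>c. \<forall>v. x$v = c)"
      proof
        assume "\<exists>c. \<forall>v. x$v = c"
        then have "x$a = x$b" by metis
        then have "pt 1 0 = (0::real^2)" using X unfolding x_def by simp
        then have "(pt 1 0) $ 1 = (0::real^2) $ 1" by simp
        then show False by simp
      qed
      show ?thesis unfolding rigid_def using z nc by blast
    next
      case False
      then have "{a,b} \<in> N" using eE ab N_def by auto
      then obtain X where X: "a \<in> X" "b \<notin> X" "\<forall>e'\<in>N - {{a,b}}. e' \<subseteq> X \<or> e' \<inter> X = {}"
        using cut[OF spN _ _ ab(2)] E2 N_def by auto
      define x :: "(real^2)^'a" where "x = (\<chi> v. if v \<in> X then pt 0 1 else 0)"
      have z: "\<forall>u w. {u,w} \<in> E - {e} \<longrightarrow> frechet_derivative (edge_len u w) (at p) x = 0"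
      proof (intro allI impI)
        fix u w assume uw: "{u,w} \<in> E - {e}"
        then have uwE: "{u,w} \<in> E" by simp
        show "frechet_derivative (edge_len u w) (at p) x = 0"
        proof (cases "pos f g {u,w}")
          case True
          have "(x$u - x$w)$1 = 0" unfolding x_def by simp
          then show ?thesis using FDp[OF uwE True] by simp
        next
          case False
          have i1: "{u,w} \<in> N" using uwE False unfolding N_def by simp
          have i2: "{u,w} \<noteq> {a,b}" using uw ab(1) by simp
          have i3: "{u,w} \<in> N - {{a,b}}" using i1 i2 by simp
          have "{u,w} \<subseteq> X \<or> {u,w} \<inter> X = {}" using bspec[OF X(3) i3] .
          then have "(u \<in> X) = (w \<in> X)" by auto
          then have "(x$u - x$w)$2 = 0" unfolding x_def by simp
          then show ?thesis using FDn[OF uwE False] by simp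
        qed
      qed
      have nc: "\<not> (\<exists>c. \<forall>v. x$v = c)"
      proof
        assume "\<exists>c. \<forall>v. x$v = c"
        then have "x$a = x$b" by metis
        then have "pt 0 1 = (0::real^2)" using X unfolding x_def by simp
        then have "(pt 0 1) $ 2 = (0::real^2) $ 2" by simp
        then show False by simp
      qed
      show ?thesis unfolding rigid_def using z nc by blast
    qed
  qed
  show ?thesis using plc wp rig mr unfolding minimally_rigid_def by blast
qed

end
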